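(* Every second-order formula is equivalent (on all finite structures) to an $\mathrm{SO}\text{-}\mathrm{KROM}^r$ formula. More precisely, for each $k\ge1$: if $k$ is even then $\Sigma^1_k\le\Sigma^1_{k+1}\text{-}\mathrm{KROM}^r$, and if $k$ is odd then $\Pi^1_k\le\Pi^1_{k+1}\text{-}\mathrm{KROM}^r$.
   Context: All structures are finite; every vocabulary contains equality. $\Sigma^1_k$ (resp. $\Pi^1_k$) is the class of second-order formulas consisting of a prefix of second-order quantifiers starting with $\exists$ (resp. $\forall$) with $k-1$ alternations between existential and universal blocks, followed by a first-order formula. For a vocabulary $\tau$, an SO-KROM$^r(\tau)$ formula is a second-order formula $Q_1R_1\cdots Q_mR_m\forall\bar{x}(C_1\wedge\cdots\wedge C_n)$, where each $Q_i\in\{\forall,\exists\}$, $R_i$ are second-order relation variables, and each clause $C_j$ is a disjunction $\beta_1\vee\cdots\vee\beta_q\vee H_1\vee H_2$ in which each $\beta_s$ is an atomic or negated atomic $\tau$-formula, and each $H_t$ is one of $R_i\bar{z}$, $\neg R_i\bar{z}$, $\exists z_1\cdots\exists z_{r}R_i z_1\dots z_r$ ($r$ the arity of $R_i$), or $\bot$. $\Sigma^1_k\text{-}\mathrm{KROM}^r$ (resp. $\Pi^1_k\text{-}\mathrm{KROM}^r$) is the set of SO-KROM$^r$ formulas whose second-order prefix starts with an existential (resp. universal) quantifier and has exactly $k-1$ alternations. $\mathcal{L}_1\le\mathcal{L}_2$ means every $\mathcal{L}_1$ formula is equivalent to some $\mathcal{L}_2$ formula over the same vocabulary. *)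

theory Defs
  imports Main
begin

text \<open>Relation symbols of a vocabulary and second-order relation variables are
  pairs (name, arity).
  A vocabulary is a set of relation symbols; equality is always available.\<close>

type_synonym rsym = "nat \<times> nat"
type_synonym svar = "nat \<times> nat"

text \<open>First-order formulas over a vocabulary, possibly containing atoms of
  second-order relation variables (the matrix of a prenex SO formula).\<close>
datatype fo =
    FEq nat nat
  | FRel rsym "nat list"
  | FSV svar "nat list"
  | FNot fo
  | FAnd fo fo
  | FOr fo fo
  | FEx nat fo
  | FAll nat fo

text \<open>Prenex second-order formula: a list of second-order quantifiers
  (True = existential, False = universal) followed by a first-order formula.\<close>
datatype soform = SO "(bool \<times> svar) list" fo

text \<open>Literals \<beta> of a Krom clause: (negated) atomic \<tau>-formulas (including equality).\<close>
datatype lit = LEq bool nat nat | LRel bool rsym "nat list"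

text \<open>The special disjuncts H: R z, \<not>R z, \<exists>z1..zr. R z1..zr (r = arity of R), or \<bottom>.\<close>
datatype hlit = HPos svar "nat list" | HNeg svar "nat list" | HNonempty svar | HBot

text \<open>A clause \<beta>1 \<or> ... \<or> \<beta>q \<or> H1 \<or> H2.\<close>
type_synonym clause = "lit list \<times> hlit \<times> hlit"

text \<open>SO-KROM formula  Q1 R1 ... Qm Rm \<forall>x1..xl (C1 \<and> ... \<and> Cn).\<close>
datatype krom = KROM "(bool \<times> svar) list" "nat list" "clause list"

fun fv :: "fo \<Rightarrow> nat set" where
  "fv (FEq x y) = {x, y}"
| "fv (FRel R xs) = set xs"
| "fv (FSV X xs) = set xs"
| "fv (FNot p) = fv p"
| "fv (FAnd p q) = fv p \<union> fv q"
| "fv (FOr p q) = fv p \<union> fv q"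
| "fv (FEx x p) = fv p - {x}"
| "fv (FAll x p) = fv p - {x}"

fun wf_fo :: "rsym set \<Rightarrow> svar set \<Rightarrow> fo \<Rightarrow> bool" where
  "wf_fo \<tau> V (FEq x y) = True"
| "wf_fo \<tau> V (FRel R xs) = (R \<in> \<tau> \<and> length xs = snd R)"
| "wf_fo \<tau> V (FSV X xs) = (X \<in> V \<and> length xs = snd X)"
| "wf_fo \<tau> V (FNot p) = wf_fo \<tau> V p"
| "wf_fo \<tau> V (FAnd p q) = (wf_fo \<tau> V p \<and> wf_fo \<tau> V q)"
| "wf_fo \<tau> V (FOr p q) = (wf_fo \<tau> V p \<and> wf_fo \<tau> V q)"
| "wf_fo \<tau> V (FEx x p) = wf_fo \<tau> V p"
| "wf_fo \<tau> V (FAll x p) = wf_fo \<tau> V p"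

fun wf_lit :: "rsym set \<Rightarrow> nat set \<Rightarrow> lit \<Rightarrow> bool" where
  "wf_lit \<tau> W (LEq b x y) = (x \<in> W \<and> y \<in> W)"
| "wf_lit \<tau> W (LRel b R xs) = (R \<in> \<tau> \<and> length xs = snd R \<and> set xs \<subseteq> W)"

fun wf_hlit :: "svar set \<Rightarrow> nat set \<Rightarrow> hlit \<Rightarrow> bool" where
  "wf_hlit V W (HPos X xs) = (X \<in> V \<and> length xs = snd X \<and> set xs \<subseteq> W)"
| "wf_hlit V W (HNeg X xs) = (X \<in> V \<and> length xs = snd X \<and> set xs \<subseteq> W)"
| "wf_hlit V W (HNonempty X) = (X \<in> V)"
| "wf_hlit V W HBot = True"

definition wf_clause :: "rsym set \<Rightarrow> svar set \<Rightarrow> nat set \<Rightarrow> clause \<Rightarrow> bool" where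
  "wf_clause \<tau> V W c = (case c of (bs, h1, h2) \<Rightarrow>
      (\<forall>b \<in> set bs. wf_lit \<tau> W b) \<and> wf_hlit V W h1 \<and> wf_hlit V W h2)"

definition nblocks :: "(bool \<times> svar) list \<Rightarrow> nat" where
  "nblocks qs = length (remdups_adj (map fst qs))"

definition prefix_class :: "bool \<Rightarrow> nat \<Rightarrow> (bool \<times> svar) list \<Rightarrow> bool" where
  "prefix_class b k qs \<longleftrightarrow> qs \<noteq> [] \<and> fst (hd qs) = b \<and> nblocks qs = k"

definition SO_class :: "bool \<Rightarrow> nat \<Rightarrow> rsym set \<Rightarrow> soform set" where
  "SO_class b k \<tau> = {SO qs p | qs p. prefix_class b k qs
       \<and> wf_fo \<tau> (snd ` set qs) p \<and> fv p = {}}"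

definition Sigma1 :: "nat \<Rightarrow> rsym set \<Rightarrow> soform set" where
  "Sigma1 k = SO_class True k"

definition Pi1 :: "nat \<Rightarrow> rsym set \<Rightarrow> soform set" where
  "Pi1 k = SO_class False k"

definition KROM_class :: "bool \<Rightarrow> nat \<Rightarrow> rsym set \<Rightarrow> krom set" where
  "KROM_class b k \<tau> = {KROM qs xs cs | qs xs cs. prefix_class b k qs
       \<and> distinct (map snd qs)
       \<and> (\<forall>c \<in> set cs. wf_clause \<tau> (snd ` set qs) (set xs) c)}"

definition Sigma1_KROM :: "nat \<Rightarrow> rsym set \<Rightarrow> krom set" where
  "Sigma1_KROM k = KROM_class True k"

definition Pi1_KROM :: "nat \<Rightarrow> rsym set \<Rightarrow> krom set" where
  "Pi1_KROM k = KROM_class False k"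

definition is_structure :: "rsym set \<Rightarrow> 'a set \<Rightarrow> (rsym \<Rightarrow> 'a list \<Rightarrow> bool) \<Rightarrow> bool" where
  "is_structure \<tau> A I \<longleftrightarrow> finite A \<and> A \<noteq> {} \<and>
     (\<forall>R ts. I R ts \<longrightarrow> R \<in> \<tau> \<and> length ts = snd R \<and> set ts \<subseteq> A)"

definition rel_on :: "'a set \<Rightarrow> nat \<Rightarrow> ('a list \<Rightarrow> bool) \<Rightarrow> bool" where
  "rel_on A n P \<longleftrightarrow> (\<forall>ts. P ts \<longrightarrow> length ts = n \<and> set ts \<subseteq> A)"

fun fo_sat :: "'a set \<Rightarrow> (rsym \<Rightarrow> 'a list \<Rightarrow> bool) \<Rightarrow> (svar \<Rightarrow> 'a list \<Rightarrow> bool)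
                 \<Rightarrow> (nat \<Rightarrow> 'a) \<Rightarrow> fo \<Rightarrow> bool" where
  "fo_sat A I S v (FEq x y) = (v x = v y)"
| "fo_sat A I S v (FRel R xs) = I R (map v xs)"
| "fo_sat A I S v (FSV X xs) = S X (map v xs)"
| "fo_sat A I S v (FNot p) = (\<not> fo_sat A I S v p)"
| "fo_sat A I S v (FAnd p q) = (fo_sat A I S v p \<and> fo_sat A I S v q)"
| "fo_sat A I S v (FOr p q) = (fo_sat A I S v p \<or> fo_sat A I S v q)"
| "fo_sat A I S v (FEx x p) = (\<exists>a \<in> A. fo_sat A I S (v(x := a)) p)"
| "fo_sat A I S v (FAll x p) = (\<forall>a \<in> A. fo_sat A I S (v(x := a)) p)"

fun q_sat :: "'a set \<Rightarrow> (bool \<times> svar) list \<Rightarrow> ((svar \<Rightarrow> 'a list \<Rightarrow> bool) \<Rightarrow> bool)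
                \<Rightarrow> (svar \<Rightarrow> 'a list \<Rightarrow> bool) \<Rightarrow> bool" where
  "q_sat A [] body S = body S"
| "q_sat A ((True, X) # qs) body S =
     (\<exists>P. rel_on A (snd X) P \<and> q_sat A qs body (S(X := P)))"
| "q_sat A ((False, X) # qs) body S =
     (\<forall>P. rel_on A (snd X) P \<longrightarrow> q_sat A qs body (S(X := P)))"

fun lit_sat :: "(rsym \<Rightarrow> 'a list \<Rightarrow> bool) \<Rightarrow> (nat \<Rightarrow> 'a) \<Rightarrow> lit \<Rightarrow> bool" where
  "lit_sat I v (LEq b x y) = (if b then v x = v y else v x \<noteq> v y)"
| "lit_sat I v (LRel b R xs) = (if b then I R (map v xs) else \<not> I R (map v xs))"

fun hlit_sat :: "'a set \<Rightarrow> (svar \<Rightarrow> 'a list \<Rightarrow> bool) \<Rightarrow> (nat \<Rightarrow> 'a) \<Rightarrow> hlit \<Rightarrow> bool" where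
  "hlit_sat A S v (HPos X xs) = S X (map v xs)"
| "hlit_sat A S v (HNeg X xs) = (\<not> S X (map v xs))"
| "hlit_sat A S v (HNonempty X) = (\<exists>ts. length ts = snd X \<and> set ts \<subseteq> A \<and> S X ts)"
| "hlit_sat A S v HBot = False"

definition clause_sat :: "'a set \<Rightarrow> (rsym \<Rightarrow> 'a list \<Rightarrow> bool) \<Rightarrow> (svar \<Rightarrow> 'a list \<Rightarrow> bool)
                            \<Rightarrow> (nat \<Rightarrow> 'a) \<Rightarrow> clause \<Rightarrow> bool" where
  "clause_sat A I S v c = (case c of (bs, h1, h2) \<Rightarrow>
      (\<exists>b \<in> set bs. lit_sat I v b) \<or> hlit_sat A S v h1 \<or> hlit_sat A S v h2)"

text \<open>Truth of sentences in a structure (variable assignments are irrelevant for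
  sentences; we start from an arbitrary assignment into A and the empty SO assignment).\<close>
definition so_models :: "'a set \<Rightarrow> (rsym \<Rightarrow> 'a list \<Rightarrow> bool) \<Rightarrow> soform \<Rightarrow> bool" where
  "so_models A I f = (case f of SO qs p \<Rightarrow>
      q_sat A qs (\<lambda>S. fo_sat A I S (\<lambda>_. SOME a. a \<in> A) p) (\<lambda>_ _. False))"

definition krom_models :: "'a set \<Rightarrow> (rsym \<Rightarrow> 'a list \<Rightarrow> bool) \<Rightarrow> krom \<Rightarrow> bool" where
  "krom_models A I f = (case f of KROM qs xs cs \<Rightarrow>
      q_sat A qs (\<lambda>S. \<forall>w. (\<forall>x. x \<notin> set xs \<longrightarrow> w x = (SOME a. a \<in> A))
                          \<and> (\<forall>x \<in> set xs. w x \<in> A)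
                          \<longrightarrow> (\<forall>c \<in> set cs. clause_sat A I S w c))
        (\<lambda>_ _. False))"

text \<open>Equivalence over all finite \<tau>-structures. Every finite structure is isomorphic
  to one whose universe is a finite set of natural numbers, so universes are taken
  to be subsets of nat.\<close>
definition equivalent :: "rsym set \<Rightarrow> soform \<Rightarrow> krom \<Rightarrow> bool" where
  "equivalent \<tau> f g \<longleftrightarrow>
     (\<forall>(A :: nat set) I. is_structure \<tau> A I \<longrightarrow> (so_models A I f \<longleftrightarrow> krom_models A I g))"

definition class_le :: "(rsym set \<Rightarrow> soform set) \<Rightarrow> (rsym set \<Rightarrow> krom set) \<Rightarrow> bool" where
  "class_le L1 L2 \<longleftrightarrow> (\<forall>\<tau>. \<forall>f \<in> L1 \<tau>. \<exists>g \<in> L2 \<tau>. equivalent \<tau> f g)"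

end

theory Submission
  imports Defs
begin


lemma q_sat_append: "q_sat A (xs @ ys) body S = q_sat A xs (q_sat A ys body) S"
proof (induction xs arbitrary: S)
  case Nil then show ?case by simp
next
  case (Cons q xs)
  obtain b X where "q = (b,X)" by (cases q) auto
  then show ?case by (cases b) (simp_all only: append_Cons q_sat.simps Cons.IH)
qed

lemma rel_on_empty: "rel_on A n (\<lambda>_. False)" by (simp add: rel_on_def)

lemma q_sat_const: "q_sat A qs (\<lambda>_. c) S = c"
proof (induction qs arbitrary: S)
  case Nil then show ?case by simp
next
  case (Cons q xs)
  obtain b X where q: "q = (b,X)" by (cases q) auto
  show ?case
  proof (cases b)
    case True then show ?thesis using q Cons.IH rel_on_empty by auto
  next
    case False then show ?thesis using q Cons.IH rel_on_empty by auto
  qed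
qed

lemma q_sat_cong: assumes "\<And>S. body S = body' S" shows "q_sat A qs body S = q_sat A qs body' S"
proof -
  have "body = body'" by (intro ext assms)
  then show ?thesis by simp
qed

lemma q_sat_all: "distinct Xs \<Longrightarrow> q_sat A (map (Pair False) Xs) body S =
   (\<forall>S'. (\<forall>X. X \<notin> set Xs \<longrightarrow> S' X = S X) \<longrightarrow> (\<forall>X\<in>set Xs. rel_on A (snd X) (S' X)) \<longrightarrow> body S')"
proof (induction Xs arbitrary: S)
  case Nil
  have "\<And>S'. (\<forall>X. X \<notin> set [] \<longrightarrow> S' X = S X) \<longleftrightarrow> S' = S" by (auto simp: fun_eq_iff)
  then show ?case by simp
next
  case (Cons X Xs)
  have "q_sat A (map (Pair False) (X#Xs)) body S = (\<forall>P. rel_on A (snd X) P \<longrightarrow> q_sat A (map (Pair False) Xs) body (S(X := P)))"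
    by simp
  also have "\<dots> = (\<forall>P. rel_on A (snd X) P \<longrightarrow> (\<forall>S'. (\<forall>Y. Y \<notin> set Xs \<longrightarrow> S' Y = (S(X:=P)) Y) \<longrightarrow> (\<forall>Y\<in>set Xs. rel_on A (snd Y) (S' Y)) \<longrightarrow> body S'))"
    using Cons by simp
  also have "\<dots> = (\<forall>S'. (\<forall>Y. Y \<notin> set (X#Xs) \<longrightarrow> S' Y = S Y) \<longrightarrow> (\<forall>Y\<in>set (X#Xs). rel_on A (snd Y) (S' Y)) \<longrightarrow> body S')"
  proof (intro iffI allI impI)
    fix S' assume H: "\<forall>P. rel_on A (snd X) P \<longrightarrow> (\<forall>S'. (\<forall>Y. Y \<notin> set Xs \<longrightarrow> S' Y = (S(X:=P)) Y) \<longrightarrow> (\<forall>Y\<in>set Xs. rel_on A (snd Y) (S' Y)) \<longrightarrow> body S')"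
      and a: "\<forall>Y. Y \<notin> set (X#Xs) \<longrightarrow> S' Y = S Y" and b: "\<forall>Y\<in>set (X#Xs). rel_on A (snd Y) (S' Y)"
    show "body S'" using H[rule_format, of "S' X" S'] a b by auto
  next
    fix P S' assume H: "\<forall>S'. (\<forall>Y. Y \<notin> set (X#Xs) \<longrightarrow> S' Y = S Y) \<longrightarrow> (\<forall>Y\<in>set (X#Xs). rel_on A (snd Y) (S' Y)) \<longrightarrow> body S'"
      and r: "rel_on A (snd X) P" and a: "\<forall>Y. Y \<notin> set Xs \<longrightarrow> S' Y = (S(X:=P)) Y" and b: "\<forall>Y\<in>set Xs. rel_on A (snd Y) (S' Y)"
    have "X \<notin> set Xs" using Cons.prems by simp
    then have "S' X = P" using a[rule_format, of X] by simp
    then show "body S'" using H[rule_format, of S'] a b r by auto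
  qed
  finally show ?case .
qed

lemma q_sat_ex: "distinct Xs \<Longrightarrow> q_sat A (map (Pair True) Xs) body S =
   (\<exists>S'. (\<forall>X. X \<notin> set Xs \<longrightarrow> S' X = S X) \<and> (\<forall>X\<in>set Xs. rel_on A (snd X) (S' X)) \<and> body S')"
proof (induction Xs arbitrary: S)
  case Nil
  have "\<And>S'. (\<forall>X. X \<notin> set [] \<longrightarrow> S' X = S X) \<longleftrightarrow> S' = S" by (auto simp: fun_eq_iff)
  then show ?case by simp
next
  case (Cons X Xs)
  have "q_sat A (map (Pair True) (X#Xs)) body S = (\<exists>P. rel_on A (snd X) P \<and> q_sat A (map (Pair True) Xs) body (S(X := P)))"
    by simp
  also have "\<dots> = (\<exists>P. rel_on A (snd X) P \<and> (\<exists>S'. (\<forall>Y. Y \<notin> set Xs \<longrightarrow> S' Y = (S(X:=P)) Y) \<and> (\<forall>Y\<in>set Xs. rel_on A (snd Y) (S' Y)) \<and> body S'))"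
    using Cons by simp
  also have "\<dots> = (\<exists>S'. (\<forall>Y. Y \<notin> set (X#Xs) \<longrightarrow> S' Y = S Y) \<and> (\<forall>Y\<in>set (X#Xs). rel_on A (snd Y) (S' Y)) \<and> body S')"
  proof (intro iffI)
    assume "\<exists>P. rel_on A (snd X) P \<and> (\<exists>S'. (\<forall>Y. Y \<notin> set Xs \<longrightarrow> S' Y = (S(X:=P)) Y) \<and> (\<forall>Y\<in>set Xs. rel_on A (snd Y) (S' Y)) \<and> body S')"
    then obtain P S' where r: "rel_on A (snd X) P" and a: "\<forall>Y. Y \<notin> set Xs \<longrightarrow> S' Y = (S(X:=P)) Y" and b: "\<forall>Y\<in>set Xs. rel_on A (snd Y) (S' Y)" and c: "body S'" by blast
    have "X \<notin> set Xs" using Cons.prems by simp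
    then have "S' X = P" using a[rule_format, of X] by simp
    then show "\<exists>S'. (\<forall>Y. Y \<notin> set (X#Xs) \<longrightarrow> S' Y = S Y) \<and> (\<forall>Y\<in>set (X#Xs). rel_on A (snd Y) (S' Y)) \<and> body S'"
      using a b c r by (intro exI[of _ S']) auto
  next
    assume "\<exists>S'. (\<forall>Y. Y \<notin> set (X#Xs) \<longrightarrow> S' Y = S Y) \<and> (\<forall>Y\<in>set (X#Xs). rel_on A (snd Y) (S' Y)) \<and> body S'"
    then obtain S' where a: "\<forall>Y. Y \<notin> set (X#Xs) \<longrightarrow> S' Y = S Y" and b: "\<forall>Y\<in>set (X#Xs). rel_on A (snd Y) (S' Y)" and c: "body S'" by blast
    show "\<exists>P. rel_on A (snd X) P \<and> (\<exists>S'. (\<forall>Y. Y \<notin> set Xs \<longrightarrow> S' Y = (S(X:=P)) Y) \<and> (\<forall>Y\<in>set Xs. rel_on A (snd Y) (S' Y)) \<and> body S')"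
      using a b c by (intro exI[of _ "S' X"] conjI exI[of _ S']) auto
  qed
  finally show ?case .
qed

lemma last_alt: "xs \<noteq> [] \<Longrightarrow> last (xs::bool list) = (if odd (length (remdups_adj xs)) then hd xs else \<not> hd xs)"
proof (induction xs rule: remdups_adj.induct)
  case 1 then show ?case by simp
next
  case (2 x) then show ?case by simp
next
  case (3 x y xs) then show ?case by (cases "x = y") auto
qed

lemma remdups_adj_ext:
  assumes "xs \<noteq> []" "last xs = False" "v > 0" "g > 0"
  shows "remdups_adj (xs @ replicate v False @ replicate g True) = remdups_adj xs @ [True]"
proof -
  obtain ys where xs: "xs = ys @ [False]" using assms by (metis append_butlast_last_id)
  obtain g' where g: "g = Suc g'" using assms by (cases g) auto
  have r1: "remdups_adj (False # replicate v False @ True # replicate g' True) = [False, True]"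
  proof -
    have "remdups_adj (replicate (Suc v) False @ True # replicate g' True)
       = remdups_adj (replicate (Suc v) False @ [True]) @ tl (remdups_adj (True # replicate g' True))"
      by (rule remdups_adj_append)
    also have "remdups_adj (True # replicate g' True) = [True]"
      using remdups_adj_replicate[of "Suc g'" True] by simp
    also have "replicate (Suc v) False @ [True] = replicate v False @ [False, True]" by (simp add: replicate_append_same[symmetric])
    also have "remdups_adj (replicate v False @ [False, True]) = remdups_adj (replicate v False @ [False]) @ [True]"
      by (simp add: remdups_adj_append_two)
    also have "replicate v False @ [False] = replicate (Suc v) False" by (simp add: replicate_append_same)
    finally show ?thesis using remdups_adj_replicate[of "Suc v" False] by simp
  qed
  have "remdups_adj (xs @ replicate v False @ replicate g True) = remdups_adj (ys @ False # (replicate v False @ True # replicate g' True))"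
    by (simp add: xs g)
  also have "\<dots> = remdups_adj (ys @ [False]) @ tl (remdups_adj (False # replicate v False @ True # replicate g' True))"
    by (rule remdups_adj_append)
  also have "\<dots> = remdups_adj xs @ [True]" using r1 xs by simp
  finally show ?thesis .
qed

fun dd :: "nat \<Rightarrow> (bool \<times> svar) list \<Rightarrow> (bool \<times> svar) list" where
  "dd M [] = []"
| "dd M ((b,X)#qs) = (if X \<in> snd ` set qs then (b, (M + length qs, snd X)) else (b,X)) # dd M qs"

lemma dd_fst: "map fst (dd M qs) = map fst qs"
proof (induction qs)
  case (Cons q qs) then show ?case by (cases q) auto
qed simp

lemma dd_length: "length (dd M qs) = length qs"
proof (induction qs)
  case (Cons q qs) then show ?case by (cases q) auto
qed simp

lemma dd_names: "(\<forall>Y\<in>snd ` set qs. fst Y < M) \<Longrightarrow> Y \<in> snd ` set (dd M qs) \<Longrightarrow> fst Y < M + length qs"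
proof (induction qs arbitrary: Y)
  case Nil then show ?case by simp
next
  case (Cons q qs)
  obtain b X where q: "q = (b,X)" by (cases q) auto
  have h: "\<forall>Y\<in>snd ` set qs. fst Y < M" using Cons.prems by auto
  have "Y \<in> snd ` set (dd M qs) \<or> Y = (M + length qs, snd X) \<or> Y = X"
    using Cons.prems q by (auto split: if_splits)
  then show ?case using Cons.IH[OF h] Cons.prems q by fastforce
qed

lemma dd_names2: "Y \<in> snd ` set (dd M qs) \<Longrightarrow> Y \<in> snd ` set qs \<or> M \<le> fst Y"
proof (induction qs arbitrary: Y)
  case Nil then show ?case by simp
next
  case (Cons q qs)
  obtain b X where q: "q = (b,X)" by (cases q) auto
  have "Y \<in> snd ` set (dd M qs) \<or> Y = (M + length qs, snd X) \<or> Y = X"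
    using Cons.prems q by (auto split: if_splits)
  then show ?case using Cons.IH q by fastforce
qed

lemma dd_keep: "X \<in> snd ` set qs \<Longrightarrow> X \<in> snd ` set (dd M qs)"
proof (induction qs)
  case (Cons q qs) then show ?case by (cases q) (auto split: if_splits)
qed simp

lemma dd_distinct: "(\<forall>Y\<in>snd ` set qs. fst Y < M) \<Longrightarrow> distinct (map snd (dd M qs))"
proof (induction qs rule: dd.induct)
  case 1 then show ?case by simp
next
  case (2 M b X qs)
  have IH: "distinct (map snd (dd M qs))" using 2 by auto
  show ?case
  proof (cases "X \<in> snd ` set qs")
    case True
    have "(M + length qs, snd X) \<notin> snd ` set (dd M qs)"
      using dd_names[of qs M] 2(2) by fastforce
    then show ?thesis using True IH by (simp add: image_iff) 
  next
    case False
    have "X \<notin> snd ` set (dd M qs)" using dd_names2[of X M qs] False 2(2) by force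
    then show ?thesis using False IH by (simp add: image_iff)
  qed
qed

lemma dd_qsat:
  assumes "\<forall>X\<in>W. fst X < M"
    and "\<forall>S S'. (\<forall>X\<in>W. S X = S' X) \<longrightarrow> body S = body S'"
    and "\<forall>X\<in>W - snd ` set qs. S X = S' X"
  shows "q_sat A qs body S = q_sat A (dd M qs) body S'"
  using assms(3)
proof (induction qs arbitrary: S S')
  case Nil then show ?case using assms(2) by simp
next
  case (Cons q qs)
  obtain b X where q: "q = (b,X)" by (cases q)
  show ?case
  proof (cases "X \<in> snd ` set qs")
    case True
    have "\<And>P. q_sat A qs body (S(X:=P)) = q_sat A (dd M qs) body (S'((M + length qs, snd X) := P))"
    proof (intro Cons.IH ballI)
      fix P Y assume Y: "Y \<in> W - snd ` set qs"
      then have "Y \<noteq> X" using True by auto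
      moreover have "Y \<noteq> (M + length qs, snd X)" using Y assms(1) by force
      moreover have "S Y = S' Y" using Cons.prems Y \<open>Y \<noteq> X\<close> q by auto
      ultimately show "(S(X:=P)) Y = (S'((M + length qs, snd X) := P)) Y" by simp
    qed
    then show ?thesis using True q by (cases b) auto
  next
    case False
    have "\<And>P. q_sat A qs body (S(X:=P)) = q_sat A (dd M qs) body (S'(X := P))"
    proof (intro Cons.IH ballI)
      fix P Y assume Y: "Y \<in> W - snd ` set qs"
      show "(S(X:=P)) Y = (S'(X := P)) Y" using Cons.prems Y q by (cases "Y = X") auto
    qed
    then show ?thesis using False q by (cases b) auto
  qed
qed



fun svs :: "fo \<Rightarrow> svar set" where
  "svs (FEq x y) = {}"
| "svs (FRel R xs) = {}"
| "svs (FSV X xs) = {X}"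
| "svs (FNot p) = svs p"
| "svs (FAnd p q) = svs p \<union> svs q"
| "svs (FOr p q) = svs p \<union> svs q"
| "svs (FEx x p) = svs p"
| "svs (FAll x p) = svs p"

fun vb :: "fo \<Rightarrow> nat" where
  "vb (FEq x y) = Suc (max x y)"
| "vb (FRel R xs) = Suc (sum_list xs)"
| "vb (FSV X xs) = Suc (sum_list xs)"
| "vb (FNot p) = vb p"
| "vb (FAnd p q) = max (vb p) (vb q)"
| "vb (FOr p q) = max (vb p) (vb q)"
| "vb (FEx x p) = max (Suc x) (vb p)"
| "vb (FAll x p) = max (Suc x) (vb p)"

lemma mem_sum_list: "x \<in> set xs \<Longrightarrow> (x::nat) < Suc (sum_list xs)"
  by (induction xs) auto

lemma fo_sat_cong_v: "vb p \<le> N \<Longrightarrow> (\<forall>x<N. v x = v' x) \<Longrightarrow> fo_sat A I S v p = fo_sat A I S v' p"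
proof (induction p arbitrary: v v')
  case (FRel R xs)
  have "map v xs = map v' xs" using FRel mem_sum_list[of _ xs] by (intro map_cong) fastforce+
  then show ?case by (metis fo_sat.simps(2))
next
  case (FSV X xs)
  have "map v xs = map v' xs" using FSV mem_sum_list[of _ xs] by (intro map_cong) fastforce+
  then show ?case by (metis fo_sat.simps(3))
next
  case (FEx x p)
  have "\<And>a. fo_sat A I S (v(x:=a)) p = fo_sat A I S (v'(x:=a)) p"
    using FEx by (intro FEx.IH) auto
  then show ?case by simp
next
  case (FAll x p)
  have "\<And>a. fo_sat A I S (v(x:=a)) p = fo_sat A I S (v'(x:=a)) p"
    using FAll by (intro FAll.IH) auto
  then show ?case by simp
qed auto

lemma fo_sat_cong_S: "(\<forall>X\<in>svs p. S X = S' X) \<Longrightarrow> fo_sat A I S v p = fo_sat A I S' v p"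
  by (induction p arbitrary: v) auto

lemma fo_sat_cong_fv: "(\<forall>x\<in>fv p. v x = v' x) \<Longrightarrow> fo_sat A I S v p = fo_sat A I S v' p"
proof (induction p arbitrary: v v')
  case (FRel R xs)
  have "map v xs = map v' xs" using FRel by (intro map_cong) auto
  then show ?case by (metis fo_sat.simps(2))
next
  case (FSV X xs)
  have "map v xs = map v' xs" using FSV by (intro map_cong) auto
  then show ?case by (metis fo_sat.simps(3))
next
  case (FEx x p)
  have "\<And>a. fo_sat A I S (v(x:=a)) p = fo_sat A I S (v'(x:=a)) p"
    using FEx.prems by (intro FEx.IH) auto
  then show ?case by simp
next
  case (FAll x p)
  have "\<And>a. fo_sat A I S (v(x:=a)) p = fo_sat A I S (v'(x:=a)) p"
    using FAll.prems by (intro FAll.IH) auto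
  then show ?case by simp
next
  case (FNot p) then show ?case by simp
next
  case (FAnd p q)
  have "fo_sat A I S v p = fo_sat A I S v' p" using FAnd.prems by (intro FAnd.IH) auto
  moreover have "fo_sat A I S v q = fo_sat A I S v' q" using FAnd.prems by (intro FAnd.IH) auto
  ultimately show ?case by simp
next
  case (FOr p q)
  have "fo_sat A I S v p = fo_sat A I S v' p" using FOr.prems by (intro FOr.IH) auto
  moreover have "fo_sat A I S v q = fo_sat A I S v' q" using FOr.prems by (intro FOr.IH) auto
  ultimately show ?case by simp
qed auto

lemma wf_svs: "wf_fo \<tau> V p \<Longrightarrow> svs p \<subseteq> V"
  by (induction p) auto

datatype item = ITau lit | ISO bool svar "nat list"

fun item_sat :: "(rsym \<Rightarrow> 'a list \<Rightarrow> bool) \<Rightarrow> (svar \<Rightarrow> 'a list \<Rightarrow> bool) \<Rightarrow> (nat \<Rightarrow> 'a) \<Rightarrow> item \<Rightarrow> bool" where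
  "item_sat I S w (ITau l) = lit_sat I w l"
| "item_sat I S w (ISO b X xs) = (S X (map w xs) = b)"

fun ivars :: "item \<Rightarrow> nat set" where
  "ivars (ITau (LEq b x y)) = {x, y}"
| "ivars (ITau (LRel b R xs)) = set xs"
| "ivars (ISO b X xs) = set xs"

fun isv :: "item \<Rightarrow> svar set" where
  "isv (ITau l) = {}"
| "isv (ISO b X xs) = {X}"

lemma item_sat_cong:
  assumes "\<forall>x\<in>ivars it. w x = w' x" "\<forall>X\<in>isv it. S X = S' X"
  shows "item_sat I S w it = item_sat I S' w' it"
proof (cases it rule: ivars.cases)
  case (1 b x y) then show ?thesis using assms by simp
next
  case (2 b R xs)
  then have "map w xs = map w' xs" using assms by (intro map_cong) auto
  then show ?thesis using 2 by (metis item_sat.simps(1) lit_sat.simps(2))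
next
  case (3 b X xs)
  then have "map w xs = map w' xs" using assms by (intro map_cong) auto
  then show ?thesis using 3 assms by (metis item_sat.simps(2) isv.simps(2) singletonI)
qed

definition check_holds :: "'a set \<Rightarrow> (rsym \<Rightarrow> 'a list \<Rightarrow> bool) \<Rightarrow> (svar \<Rightarrow> 'a list \<Rightarrow> bool) \<Rightarrow> nat \<Rightarrow> item list \<Rightarrow> bool" where
  "check_holds A I S N c = (\<exists>w. (\<forall>i. w i \<in> A) \<and> (\<forall>z\<in>A. \<forall>it\<in>set c. item_sat I S (w(N+3 := z)) it))"

lemma check_holds_cong: "(\<forall>it\<in>set c. \<forall>X\<in>isv it. S X = S' X) \<Longrightarrow> check_holds A I S N c = check_holds A I S' N c"
  unfolding check_holds_def using item_sat_cong by metis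

lemma chk_no: "\<not> check_holds A I S N c \<Longrightarrow> \<forall>i. w i \<in> A \<Longrightarrow> \<exists>z\<in>A. \<exists>it\<in>set c. \<not> item_sat I S (w(N+3:=z)) it"
  unfolding check_holds_def by blast

fun tr :: "nat \<Rightarrow> nat \<Rightarrow> bool \<Rightarrow> fo \<Rightarrow> nat \<times> item list list" where
  "tr N n pol (FEq x y) = (Suc n, [[ITau (LEq pol x y), ISO False (n,N) [0..<N]]])"
| "tr N n pol (FRel R xs) = (Suc n, [[ITau (LRel pol R xs), ISO False (n,N) [0..<N]]])"
| "tr N n pol (FSV X xs) = (Suc n, [[ISO pol X xs, ISO False (n,N) [0..<N]]])"
| "tr N n pol (FNot p) = tr N n (\<not>pol) p"
| "tr N n pol (FAnd p q) = (let r1 = tr N (Suc n) pol p; r2 = tr N (fst r1) pol q in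
     (fst r2, (if pol then [[ISO True (Suc n,N) [0..<N], ISO True (fst r1,N) [0..<N], ISO False (n,N) [0..<N]]]
               else [[ISO True (Suc n,N) [0..<N], ISO False (n,N) [0..<N]], [ISO True (fst r1,N) [0..<N], ISO False (n,N) [0..<N]]]) @ snd r1 @ snd r2))"
| "tr N n pol (FOr p q) = (let r1 = tr N (Suc n) pol p; r2 = tr N (fst r1) pol q in
     (fst r2, (if pol then [[ISO True (Suc n,N) [0..<N], ISO False (n,N) [0..<N]], [ISO True (fst r1,N) [0..<N], ISO False (n,N) [0..<N]]]
               else [[ISO True (Suc n,N) [0..<N], ISO True (fst r1,N) [0..<N], ISO False (n,N) [0..<N]]]) @ snd r1 @ snd r2))"
| "tr N n pol (FEx x p) = (let r1 = tr N (Suc n) pol p in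
     (fst r1, [ISO True (Suc n,N) ([0..<N][x := (if pol then N else N+3)]), ISO False (n,N) [0..<N]] # snd r1))"
| "tr N n pol (FAll x p) = (let r1 = tr N (Suc n) pol p in
     (fst r1, [ISO True (Suc n,N) ([0..<N][x := (if pol then N+3 else N)]), ISO False (n,N) [0..<N]] # snd r1))"

lemma tr_mono: "n < fst (tr N n pol p)"
proof (induction p arbitrary: n pol)
  case (FAnd p q) then show ?case by (simp add: Let_def) (meson Suc_lessD less_trans)
next
  case (FOr p q) then show ?case by (simp add: Let_def) (meson Suc_lessD less_trans)
next
  case (FEx x p) then show ?case by (simp add: Let_def) (meson Suc_lessD)
next
  case (FAll x p) then show ?case by (simp add: Let_def) (meson Suc_lessD)
qed auto

lemma tr_isv: "c \<in> set (snd (tr N n pol p)) \<Longrightarrow> it \<in> set c \<Longrightarrow> X \<in> isv it \<Longrightarrow>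
   X \<in> svs p \<or> (snd X = N \<and> n \<le> fst X \<and> fst X < fst (tr N n pol p))"
proof (induction p arbitrary: n pol c)
  case (FAnd p q)
  have m1: "Suc n < fst (tr N (Suc n) pol p)" "fst (tr N (Suc n) pol p) < fst (tr N (fst (tr N (Suc n) pol p)) pol q)" using tr_mono by auto
  show ?case using FAnd.prems FAnd.IH[of c "Suc n" pol] FAnd.IH[of c "fst (tr N (Suc n) pol p)" pol] m1
    by (auto simp: Let_def split: if_splits)
next
  case (FOr p q)
  have m1: "Suc n < fst (tr N (Suc n) pol p)" "fst (tr N (Suc n) pol p) < fst (tr N (fst (tr N (Suc n) pol p)) pol q)" using tr_mono by auto
  show ?case using FOr.prems FOr.IH[of c "Suc n" pol] FOr.IH[of c "fst (tr N (Suc n) pol p)" pol] m1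
    by (auto simp: Let_def split: if_splits)
next
  case (FEx x p)
  have m1: "Suc n < fst (tr N (Suc n) pol p)" using tr_mono by auto
  show ?case using FEx.prems FEx.IH[of c "Suc n" pol] m1 by (auto simp: Let_def split: if_splits)
next
  case (FAll x p)
  have m1: "Suc n < fst (tr N (Suc n) pol p)" using tr_mono by auto
  show ?case using FAll.prems FAll.IH[of c "Suc n" pol] m1 by (auto simp: Let_def split: if_splits)
qed auto

lemma set_upd_upt: "x \<in> set ([0..<N][y:=c]) \<Longrightarrow> x < N \<or> x = c"
  using set_update_subset_insert[of "[0..<N]" y c] by fastforce

lemma tr_ivars: "vb p \<le> N \<Longrightarrow> c \<in> set (snd (tr N n pol p)) \<Longrightarrow> it \<in> set c \<Longrightarrow> x \<in> ivars it \<Longrightarrow> x \<le> N \<or> x = N + 3"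
proof (induction p arbitrary: n pol c)
  case (FRel R xs) then show ?case using mem_sum_list[of x xs] by auto
next
  case (FSV X xs) then show ?case using mem_sum_list[of x xs] by auto
next
  case (FAnd p q) then show ?case by (auto simp: Let_def split: if_splits)
next
  case (FOr p q) then show ?case by (auto simp: Let_def split: if_splits)
next
  case (FEx y p)
  then show ?case using set_upd_upt[of x N y N] set_upd_upt[of x N y "N+3"]
    by (auto simp: Let_def split: if_splits)
next
  case (FAll y p)
  then show ?case using set_upd_upt[of x N y N] set_upd_upt[of x N y "N+3"]
    by (auto simp: Let_def split: if_splits)
qed auto

lemma map_upd_upt: "x < N \<Longrightarrow> map (w(x:=a)) [0..<N] = (map w [0..<N])[x := a]"
  by (rule nth_equalityI) auto

lemma map_upd2: "x < N \<Longrightarrow> N \<le> c \<Longrightarrow> \<forall>i<N. g i = w i \<Longrightarrow> map g ([0..<N][x := c]) = map (w(x := g c)) [0..<N]"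
  by (intro nth_equalityI) (auto simp: nth_list_update)



lemma xv_upd3: "map (w(N+3:=z)) [0..<N] = map w [0..<N]"
  by simp

lemma tr_sound:
  assumes "vb p \<le> N" "\<forall>c\<in>set (snd (tr N n pol p)). \<not> check_holds A I S N c" "\<forall>i. w i \<in> A"
    "fo_sat A I S w p = pol"
  shows "S (n,N) (map w [0..<N])"
  using assms
proof (induction p arbitrary: n pol w)
  case (FEq x y)
  have c0: "\<not> check_holds A I S N [ITau (LEq pol x y), ISO False (n,N) [0..<N]]" using FEq.prems(2) by simp
    obtain z it where "z\<in>A" "it \<in> set [ITau (LEq pol x y), ISO False (n,N) [0..<N]]" "\<not> item_sat I S (w(N+3:=z)) it"
    using chk_no[OF c0 FEq.prems(3)] by blast
  then show ?case using FEq.prems by (auto split: if_splits)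
next
  case (FRel R xs)
  have mw: "map (w(N+3:=z)) xs = map w xs" for z using FRel.prems(1) mem_sum_list[of _ xs] by (intro map_cong) fastforce+
  have c0: "\<not> check_holds A I S N [ITau (LRel pol R xs), ISO False (n,N) [0..<N]]" using FRel.prems(2) by simp
    obtain z it where "z\<in>A" "it \<in> set [ITau (LRel pol R xs), ISO False (n,N) [0..<N]]" "\<not> item_sat I S (w(N+3:=z)) it"
    using chk_no[OF c0 FRel.prems(3)] by blast
  then show ?case using FRel.prems mw[of z] by (auto split: if_splits)
next
  case (FSV X xs)
  have mw: "map (w(N+3:=z)) xs = map w xs" for z using FSV.prems(1) mem_sum_list[of _ xs] by (intro map_cong) fastforce+
  have c0: "\<not> check_holds A I S N [ISO pol X xs, ISO False (n,N) [0..<N]]" using FSV.prems(2) by simp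
    obtain z it where "z\<in>A" "it \<in> set [ISO pol X xs, ISO False (n,N) [0..<N]]" "\<not> item_sat I S (w(N+3:=z)) it"
    using chk_no[OF c0 FSV.prems(3)] by blast
  then show ?case using FSV.prems mw[of z] by (auto split: if_splits)
next
  case (FNot p)
  then show ?case by (intro FNot.IH[of n "\<not> pol"]) auto
next
  case (FAnd p q)
  define m1 where "m1 = fst (tr N (Suc n) pol p)"
  have cs: "snd (tr N n pol (FAnd p q)) = (if pol then [[ISO True (Suc n,N) [0..<N], ISO True (m1,N) [0..<N], ISO False (n,N) [0..<N]]]
               else [[ISO True (Suc n,N) [0..<N], ISO False (n,N) [0..<N]], [ISO True (m1,N) [0..<N], ISO False (n,N) [0..<N]]]) @ snd (tr N (Suc n) pol p) @ snd (tr N m1 pol q)"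
    by (simp add: Let_def m1_def)
  have IH1: "fo_sat A I S w p = pol \<Longrightarrow> S (Suc n, N) (map w [0..<N])"
    using FAnd.prems cs by (intro FAnd.IH(1)) auto
  have IH2: "fo_sat A I S w q = pol \<Longrightarrow> S (m1, N) (map w [0..<N])"
    using FAnd.prems cs by (intro FAnd.IH(2)) auto
  show ?case
  proof (cases pol)
    case True
    have c0: "\<not> check_holds A I S N [ISO True (Suc n,N) [0..<N], ISO True (m1,N) [0..<N], ISO False (n,N) [0..<N]]" using FAnd.prems(2) cs True by simp
      obtain z it where "z\<in>A" "it \<in> set [ISO True (Suc n,N) [0..<N], ISO True (m1,N) [0..<N], ISO False (n,N) [0..<N]]" "\<not> item_sat I S (w(N+3:=z)) it"
      using chk_no[OF c0 FAnd.prems(3)] by blast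
    then show ?thesis using FAnd.prems IH1 IH2 True by auto
  next
    case False
    then have "fo_sat A I S w p = pol \<or> fo_sat A I S w q = pol" using FAnd.prems by auto
    then show ?thesis
    proof
      assume a: "fo_sat A I S w p = pol"
      have c0: "\<not> check_holds A I S N [ISO True (Suc n,N) [0..<N], ISO False (n,N) [0..<N]]" using FAnd.prems(2) cs False by simp
        obtain z it where "z\<in>A" "it \<in> set [ISO True (Suc n,N) [0..<N], ISO False (n,N) [0..<N]]" "\<not> item_sat I S (w(N+3:=z)) it"
        using chk_no[OF c0 FAnd.prems(3)] by blast
      then show ?thesis using IH1 a by auto
    next
      assume a: "fo_sat A I S w q = pol"
      have c0: "\<not> check_holds A I S N [ISO True (m1,N) [0..<N], ISO False (n,N) [0..<N]]" using FAnd.prems(2) cs False by simp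
        obtain z it where "z\<in>A" "it \<in> set [ISO True (m1,N) [0..<N], ISO False (n,N) [0..<N]]" "\<not> item_sat I S (w(N+3:=z)) it"
        using chk_no[OF c0 FAnd.prems(3)] by blast
      then show ?thesis using IH2 a by auto
    qed
  qed
next
  case (FOr p q)
  define m1 where "m1 = fst (tr N (Suc n) pol p)"
  have cs: "snd (tr N n pol (FOr p q)) = (if pol then [[ISO True (Suc n,N) [0..<N], ISO False (n,N) [0..<N]], [ISO True (m1,N) [0..<N], ISO False (n,N) [0..<N]]]
               else [[ISO True (Suc n,N) [0..<N], ISO True (m1,N) [0..<N], ISO False (n,N) [0..<N]]]) @ snd (tr N (Suc n) pol p) @ snd (tr N m1 pol q)"
    by (simp add: Let_def m1_def)
  have IH1: "fo_sat A I S w p = pol \<Longrightarrow> S (Suc n, N) (map w [0..<N])"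
    using FOr.prems cs by (intro FOr.IH(1)) auto
  have IH2: "fo_sat A I S w q = pol \<Longrightarrow> S (m1, N) (map w [0..<N])"
    using FOr.prems cs by (intro FOr.IH(2)) auto
  show ?case
  proof (cases pol)
    case False
    have c0: "\<not> check_holds A I S N [ISO True (Suc n,N) [0..<N], ISO True (m1,N) [0..<N], ISO False (n,N) [0..<N]]" using FOr.prems(2) cs False by simp
      obtain z it where "z\<in>A" "it \<in> set [ISO True (Suc n,N) [0..<N], ISO True (m1,N) [0..<N], ISO False (n,N) [0..<N]]" "\<not> item_sat I S (w(N+3:=z)) it"
      using chk_no[OF c0 FOr.prems(3)] by blast
    then show ?thesis using FOr.prems IH1 IH2 False by auto
  next
    case True
    then have "fo_sat A I S w p = pol \<or> fo_sat A I S w q = pol" using FOr.prems by auto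
    then show ?thesis
    proof
      assume a: "fo_sat A I S w p = pol"
      have c0: "\<not> check_holds A I S N [ISO True (Suc n,N) [0..<N], ISO False (n,N) [0..<N]]" using FOr.prems(2) cs True by simp
        obtain z it where "z\<in>A" "it \<in> set [ISO True (Suc n,N) [0..<N], ISO False (n,N) [0..<N]]" "\<not> item_sat I S (w(N+3:=z)) it"
        using chk_no[OF c0 FOr.prems(3)] by blast
      then show ?thesis using IH1 a by auto
    next
      assume a: "fo_sat A I S w q = pol"
      have c0: "\<not> check_holds A I S N [ISO True (m1,N) [0..<N], ISO False (n,N) [0..<N]]" using FOr.prems(2) cs True by simp
        obtain z it where "z\<in>A" "it \<in> set [ISO True (m1,N) [0..<N], ISO False (n,N) [0..<N]]" "\<not> item_sat I S (w(N+3:=z)) it"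
        using chk_no[OF c0 FOr.prems(3)] by blast
      then show ?thesis using IH2 a by auto
    qed
  qed
next
  case (FEx x p)
  have xN: "x < N" using FEx.prems(1) by simp
  have cs: "snd (tr N n pol (FEx x p)) = [ISO True (Suc n,N) ([0..<N][x := (if pol then N else N+3)]), ISO False (n,N) [0..<N]] # snd (tr N (Suc n) pol p)"
    by (simp add: Let_def)
  have IH: "\<forall>i. w' i \<in> A \<Longrightarrow> fo_sat A I S w' p = pol \<Longrightarrow> S (Suc n, N) (map w' [0..<N])" for w'
    using FEx.prems cs by (intro FEx.IH) auto
  show ?case
  proof (cases pol)
    case True
    then obtain a where a: "a \<in> A" "fo_sat A I S (w(x:=a)) p = pol" using FEx.prems by auto
    have h1: "S (Suc n, N) (map (w(x:=a)) [0..<N])" using IH[OF _ a(2)] FEx.prems(3) a(1) by simp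
    have wA: "\<forall>i. (w(N:=a)) i \<in> A" using FEx.prems(3) a(1) by simp
    have c0: "\<not> check_holds A I S N [ISO True (Suc n,N) ([0..<N][x := N]), ISO False (n,N) [0..<N]]" using FEx.prems(2) cs True by simp
      obtain z it where z: "z\<in>A" "it \<in> set [ISO True (Suc n,N) ([0..<N][x := N]), ISO False (n,N) [0..<N]]" "\<not> item_sat I S ((w(N:=a))(N+3:=z)) it"
      using chk_no[OF c0 wA] by blast
    have e: "map ((w(N:=a))(N+3:=z)) ([0..<N][x := N]) = map (w(x:=a)) [0..<N]"
      using map_upd2[OF xN order_refl, of "(w(N:=a))(N+3:=z)" w] by simp
    show ?thesis using z h1 e by auto
  next
    case False
    have h1: "S (Suc n, N) (map (w(x:=a)) [0..<N])" if "a \<in> A" for a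
      using IH[of "w(x:=a)"] FEx.prems(3,4) that False by auto
    have c0: "\<not> check_holds A I S N [ISO True (Suc n,N) ([0..<N][x := N+3]), ISO False (n,N) [0..<N]]" using FEx.prems(2) cs False by simp
      obtain z it where z: "z\<in>A" "it \<in> set [ISO True (Suc n,N) ([0..<N][x := N+3]), ISO False (n,N) [0..<N]]" "\<not> item_sat I S (w(N+3:=z)) it"
      using chk_no[OF c0 FEx.prems(3)] by blast
    have e: "map (w(N+3:=z)) ([0..<N][x := N+3]) = map (w(x:=z)) [0..<N]"
      using map_upd2[OF xN, of "N+3" "w(N+3:=z)" w] by simp
    show ?thesis using z h1[OF z(1)] e by auto
  qed
next
  case (FAll x p)
  have xN: "x < N" using FAll.prems(1) by simp
  have cs: "snd (tr N n pol (FAll x p)) = [ISO True (Suc n,N) ([0..<N][x := (if pol then N+3 else N)]), ISO False (n,N) [0..<N]] # snd (tr N (Suc n) pol p)"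
    by (simp add: Let_def)
  have IH: "\<forall>i. w' i \<in> A \<Longrightarrow> fo_sat A I S w' p = pol \<Longrightarrow> S (Suc n, N) (map w' [0..<N])" for w'
    using FAll.prems cs by (intro FAll.IH) auto
  show ?case
  proof (cases pol)
    case False
    then obtain a where a: "a \<in> A" "fo_sat A I S (w(x:=a)) p = pol" using FAll.prems by auto
    have h1: "S (Suc n, N) (map (w(x:=a)) [0..<N])" using IH[OF _ a(2)] FAll.prems(3) a(1) by simp
    have wA: "\<forall>i. (w(N:=a)) i \<in> A" using FAll.prems(3) a(1) by simp
    have c0: "\<not> check_holds A I S N [ISO True (Suc n,N) ([0..<N][x := N]), ISO False (n,N) [0..<N]]" using FAll.prems(2) cs False by simp
      obtain z it where z: "z\<in>A" "it \<in> set [ISO True (Suc n,N) ([0..<N][x := N]), ISO False (n,N) [0..<N]]" "\<not> item_sat I S ((w(N:=a))(N+3:=z)) it"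
      using chk_no[OF c0 wA] by blast
    have e: "map ((w(N:=a))(N+3:=z)) ([0..<N][x := N]) = map (w(x:=a)) [0..<N]"
      using map_upd2[OF xN order_refl, of "(w(N:=a))(N+3:=z)" w] by simp
    show ?thesis using z h1 e by auto
  next
    case True
    have h1: "S (Suc n, N) (map (w(x:=a)) [0..<N])" if "a \<in> A" for a
      using IH[of "w(x:=a)"] FAll.prems(3,4) that True by auto
    have c0: "\<not> check_holds A I S N [ISO True (Suc n,N) ([0..<N][x := N+3]), ISO False (n,N) [0..<N]]" using FAll.prems(2) cs True by simp
      obtain z it where z: "z\<in>A" "it \<in> set [ISO True (Suc n,N) ([0..<N][x := N+3]), ISO False (n,N) [0..<N]]" "\<not> item_sat I S (w(N+3:=z)) it"
      using chk_no[OF c0 FAll.prems(3)] by blast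
    have e: "map (w(N+3:=z)) ([0..<N][x := N+3]) = map (w(x:=z)) [0..<N]"
      using map_upd2[OF xN, of "N+3" "w(N+3:=z)" w] by simp
    show ?thesis using z h1[OF z(1)] e by auto
  qed
qed



definition Tr :: "'a set \<Rightarrow> (rsym \<Rightarrow> 'a list \<Rightarrow> bool) \<Rightarrow> (svar \<Rightarrow> 'a list \<Rightarrow> bool) \<Rightarrow> nat \<Rightarrow> fo \<Rightarrow> bool \<Rightarrow> 'a list \<Rightarrow> bool" where
  "Tr A I S N p pol = (\<lambda>ts. length ts = N \<and> set ts \<subseteq> A \<and> fo_sat A I S (\<lambda>i. if i < N then ts ! i else (SOME a. a \<in> A)) p = pol)"

lemma Tr_rel: "rel_on A N (Tr A I S N p pol)"
  by (simp add: Tr_def rel_on_def)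

lemma Tr_map: "vb p \<le> N \<Longrightarrow> \<forall>i. w i \<in> A \<Longrightarrow> Tr A I S N p pol (map w [0..<N]) = (fo_sat A I S w p = pol)"
proof -
  assume a: "vb p \<le> N" "\<forall>i. w i \<in> A"
  have "fo_sat A I S (\<lambda>i. if i < N then map w [0..<N] ! i else (SOME a. a \<in> A)) p = fo_sat A I S w p"
    by (rule fo_sat_cong_v[OF a(1)]) simp
  then show ?thesis using a by (auto simp: Tr_def)
qed

abbreviation inR :: "nat \<Rightarrow> nat \<Rightarrow> nat \<Rightarrow> svar \<Rightarrow> bool" where
  "inR N a b X \<equiv> snd X = N \<and> a \<le> fst X \<and> fst X < b"

lemma chk_yes: "check_holds A I S N c \<Longrightarrow> \<exists>w. (\<forall>i. w i \<in> A) \<and> (\<forall>z\<in>A. \<forall>it\<in>set c. item_sat I S (w(N+3 := z)) it)"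
  by (simp add: check_holds_def)

lemma leaf_complete:
  assumes "vb p \<le> N"
    and "\<And>w z. \<forall>i. w i \<in> A \<Longrightarrow> z \<in> A \<Longrightarrow> item_sat I (S((n,N) := Tr A I S N p pol)) (w(N+3:=z)) it0 = (fo_sat A I S w p = pol)"
  shows "\<exists>S'. (\<forall>X. \<not> inR N n (Suc n) X \<longrightarrow> S' X = S X)
   \<and> (\<forall>j. n \<le> j \<and> j < Suc n \<longrightarrow> rel_on A N (S' (j,N)))
   \<and> (\<forall>w. (\<forall>i. w i \<in> A) \<longrightarrow> S' (n,N) (map w [0..<N]) = (fo_sat A I S w p = pol))
   \<and> (\<forall>c\<in>set [[it0, ISO False (n,N) [0..<N]]]. \<not> check_holds A I S' N c)"
proof (intro exI[of _ "S((n,N) := Tr A I S N p pol)"] conjI allI impI ballI)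
  fix c assume "c \<in> set [[it0, ISO False (n,N) [0..<N]]]"
  then have c: "c = [it0, ISO False (n,N) [0..<N]]" by simp
  show "\<not> check_holds A I (S((n,N) := Tr A I S N p pol)) N c"
  proof
    assume "check_holds A I (S((n,N) := Tr A I S N p pol)) N c"
    then obtain w where w: "\<forall>i. w i \<in> A" "\<forall>z\<in>A. \<forall>it\<in>set c. item_sat I (S((n,N) := Tr A I S N p pol)) (w(N+3 := z)) it"
      using chk_yes by blast
    have all: "\<forall>it\<in>set c. item_sat I (S((n,N) := Tr A I S N p pol)) (w(N+3 := w 0)) it" using w by blast
    have "item_sat I (S((n,N) := Tr A I S N p pol)) (w(N+3 := w 0)) it0" using all c by simp
    then have f: "fo_sat A I S w p = pol" using assms(2) w(1) by blast
    have "item_sat I (S((n,N) := Tr A I S N p pol)) (w(N+3 := w 0)) (ISO False (n,N) [0..<N])" using all c by simp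
    then have "\<not> Tr A I S N p pol (map w [0..<N])" by (simp add: xv_upd3)
    then show False using Tr_map[OF assms(1) w(1)] f by simp
  qed
qed (auto simp: Tr_rel Tr_map[OF assms(1)])


lemma tr_complete:
  assumes "vb p \<le> N" "\<forall>X\<in>svs p. fst X < n"
  shows "\<exists>S'. (\<forall>X. \<not> inR N n (fst (tr N n pol p)) X \<longrightarrow> S' X = S X)
   \<and> (\<forall>j. n \<le> j \<and> j < fst (tr N n pol p) \<longrightarrow> rel_on A N (S' (j,N)))
   \<and> (\<forall>w. (\<forall>i. w i \<in> A) \<longrightarrow> S' (n,N) (map w [0..<N]) = (fo_sat A I S w p = pol))
   \<and> (\<forall>c\<in>set (snd (tr N n pol p)). \<not> check_holds A I S' N c)"
  using assms
proof (induction p arbitrary: n pol S)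
  case (FEq x y)
  have h: "\<And>w z. \<forall>i. w i \<in> A \<Longrightarrow> z \<in> A \<Longrightarrow> item_sat I (S((n,N) := Tr A I S N (FEq x y) pol)) (w(N+3:=z)) (ITau (LEq pol x y)) = (fo_sat A I S w (FEq x y) = pol)"
    using FEq.prems(1) by auto
  show ?case using leaf_complete[OF FEq.prems(1) h] by simp
next
  case (FRel R xs)
  have mw: "map (w(N+3:=z)) xs = map w xs" for w z using FRel.prems(1) mem_sum_list[of _ xs] by (intro map_cong) fastforce+
  have h: "\<And>w z. \<forall>i. w i \<in> A \<Longrightarrow> z \<in> A \<Longrightarrow> item_sat I (S((n,N) := Tr A I S N (FRel R xs) pol)) (w(N+3:=z)) (ITau (LRel pol R xs)) = (fo_sat A I S w (FRel R xs) = pol)"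
    by (simp only: item_sat.simps lit_sat.simps fo_sat.simps mw) auto
  show ?case using leaf_complete[OF FRel.prems(1) h] by simp
next
  case (FSV X xs)
  have mw: "map (w(N+3:=z)) xs = map w xs" for w z using FSV.prems(1) mem_sum_list[of _ xs] by (intro map_cong) fastforce+
  have XN: "X \<noteq> (n,N)" using FSV.prems(2) by auto
  have h: "\<And>w z. \<forall>i. w i \<in> A \<Longrightarrow> z \<in> A \<Longrightarrow> item_sat I (S((n,N) := Tr A I S N (FSV X xs) pol)) (w(N+3:=z)) (ISO pol X xs) = (fo_sat A I S w (FSV X xs) = pol)"
    using XN by (simp only: item_sat.simps fo_sat.simps mw fun_upd_other) auto
  show ?case using leaf_complete[OF FSV.prems(1) h] by simp
next
  case (FNot p)
  obtain S' where S': "(\<forall>X. \<not> inR N n (fst (tr N n (\<not>pol) p)) X \<longrightarrow> S' X = S X)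
   \<and> (\<forall>j. n \<le> j \<and> j < fst (tr N n (\<not>pol) p) \<longrightarrow> rel_on A N (S' (j,N)))
   \<and> (\<forall>w. (\<forall>i. w i \<in> A) \<longrightarrow> S' (n,N) (map w [0..<N]) = (fo_sat A I S w p = (\<not>pol)))
   \<and> (\<forall>c\<in>set (snd (tr N n (\<not>pol) p)). \<not> check_holds A I S' N c)"
    using FNot.IH[of n "\<not>pol" S] FNot.prems by auto
  show ?case by (rule exI[of _ S']) (use S' in auto)
next
  case (FAnd p q)
  define m1 where "m1 = fst (tr N (Suc n) pol p)"
  define m2 where "m2 = fst (tr N m1 pol q)"
  have m: "Suc n < m1" "m1 < m2" using tr_mono m1_def m2_def by auto
  have trv: "tr N n pol (FAnd p q) = (m2, (if pol then [[ISO True (Suc n,N) [0..<N], ISO True (m1,N) [0..<N], ISO False (n,N) [0..<N]]]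
               else [[ISO True (Suc n,N) [0..<N], ISO False (n,N) [0..<N]], [ISO True (m1,N) [0..<N], ISO False (n,N) [0..<N]]]) @ snd (tr N (Suc n) pol p) @ snd (tr N m1 pol q))"
    by (simp add: Let_def m1_def m2_def)
  have vbp: "vb p \<le> N" "vb q \<le> N" using FAnd.prems by auto
  have u: "\<forall>X\<in>svs p \<union> svs q. fst X < n" using FAnd.prems(2) by simp
  have sp1: "\<forall>X\<in>svs p. fst X < Suc n" using u by (meson UnI1 less_SucI)
  have sp2: "\<forall>X\<in>svs q. fst X < m1" using u m by (meson UnI2 less_SucI less_trans)
  note sp = sp1 sp2
  have "\<exists>S1. (\<forall>X. \<not> inR N (Suc n) m1 X \<longrightarrow> S1 X = S X)
     \<and> (\<forall>j. Suc n \<le> j \<and> j < m1 \<longrightarrow> rel_on A N (S1 (j,N)))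
     \<and> (\<forall>w. (\<forall>i. w i \<in> A) \<longrightarrow> S1 (Suc n,N) (map w [0..<N]) = (fo_sat A I S w p = pol))
     \<and> (\<forall>c\<in>set (snd (tr N (Suc n) pol p)). \<not> check_holds A I S1 N c)"
    unfolding m1_def by (rule FAnd.IH(1)[OF vbp(1) sp(1)])
  then obtain S1 where S1: "\<forall>X. \<not> inR N (Suc n) m1 X \<longrightarrow> S1 X = S X"
     "\<forall>j. Suc n \<le> j \<and> j < m1 \<longrightarrow> rel_on A N (S1 (j,N))"
     "\<forall>w. (\<forall>i. w i \<in> A) \<longrightarrow> S1 (Suc n,N) (map w [0..<N]) = (fo_sat A I S w p = pol)"
     "\<forall>c\<in>set (snd (tr N (Suc n) pol p)). \<not> check_holds A I S1 N c"
    by blast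
  have "\<exists>S2. (\<forall>X. \<not> inR N m1 m2 X \<longrightarrow> S2 X = S1 X)
     \<and> (\<forall>j. m1 \<le> j \<and> j < m2 \<longrightarrow> rel_on A N (S2 (j,N)))
     \<and> (\<forall>w. (\<forall>i. w i \<in> A) \<longrightarrow> S2 (m1,N) (map w [0..<N]) = (fo_sat A I S1 w q = pol))
     \<and> (\<forall>c\<in>set (snd (tr N m1 pol q)). \<not> check_holds A I S2 N c)"
    unfolding m2_def by (rule FAnd.IH(2)[OF vbp(2) sp(2)])
  then obtain S2 where S2: "\<forall>X. \<not> inR N m1 m2 X \<longrightarrow> S2 X = S1 X"
     "\<forall>j. m1 \<le> j \<and> j < m2 \<longrightarrow> rel_on A N (S2 (j,N))"
     "\<forall>w. (\<forall>i. w i \<in> A) \<longrightarrow> S2 (m1,N) (map w [0..<N]) = (fo_sat A I S1 w q = pol)"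
     "\<forall>c\<in>set (snd (tr N m1 pol q)). \<not> check_holds A I S2 N c"
    by blast
  define S3 where "S3 = S2((n,N) := Tr A I S N (FAnd p q) pol)"
  have q1: "fo_sat A I S1 w q = fo_sat A I S w q" for w
  proof (intro fo_sat_cong_S ballI)
    fix X assume "X \<in> svs q"
    then have "fst X < n" using FAnd.prems(2) by auto
    then show "S1 X = S X" using S1(1)[rule_format, of X] by simp
  qed
  have c1: "\<forall>w. (\<forall>i. w i \<in> A) \<longrightarrow> S3 (Suc n,N) (map w [0..<N]) = (fo_sat A I S w p = pol)"
    using S1(3) S2(1) m unfolding S3_def by auto
  have c2: "\<forall>w. (\<forall>i. w i \<in> A) \<longrightarrow> S3 (m1,N) (map w [0..<N]) = (fo_sat A I S w q = pol)"
    using S2(3) q1 m unfolding S3_def by auto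
  have c0: "\<forall>w. (\<forall>i. w i \<in> A) \<longrightarrow> S3 (n,N) (map w [0..<N]) = (fo_sat A I S w (FAnd p q) = pol)"
    unfolding S3_def fun_upd_same using Tr_map[OF FAnd.prems(1)] by blast
  have ch1: "\<forall>c\<in>set (snd (tr N (Suc n) pol p)). \<not> check_holds A I S3 N c"
  proof
    fix c assume c: "c \<in> set (snd (tr N (Suc n) pol p))"
    have "\<forall>it\<in>set c. \<forall>X\<in>isv it. S3 X = S1 X"
    proof (intro ballI)
      fix it X assume "it \<in> set c" "X \<in> isv it"
      then have "X \<in> svs p \<or> inR N (Suc n) m1 X" using tr_isv[OF c] m1_def by blast
      then have "fst X < n \<or> inR N (Suc n) m1 X" using u by blast
      then have "X \<noteq> (n,N)" "\<not> inR N m1 m2 X" using m by auto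
      then show "S3 X = S1 X" unfolding S3_def using S2(1)[rule_format, of X] by simp
    qed
    then show "\<not> check_holds A I S3 N c" using check_holds_cong S1(4) c by metis
  qed
  have ch2: "\<forall>c\<in>set (snd (tr N m1 pol q)). \<not> check_holds A I S3 N c"
  proof
    fix c assume c: "c \<in> set (snd (tr N m1 pol q))"
    have "\<forall>it\<in>set c. \<forall>X\<in>isv it. S3 X = S2 X"
    proof (intro ballI)
      fix it X assume "it \<in> set c" "X \<in> isv it"
      then have "X \<in> svs q \<or> inR N m1 m2 X" using tr_isv[OF c] m2_def by blast
      then have "fst X < n \<or> inR N m1 m2 X" using u by blast
      then have "X \<noteq> (n,N)" using m by auto
      then show "S3 X = S2 X" unfolding S3_def by simp
    qed
    then show "\<not> check_holds A I S3 N c" using check_holds_cong S2(4) c by metis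
  qed
  have loc: "\<not> check_holds A I S3 N c" if c: "c \<in> set (if pol then [[ISO True (Suc n,N) [0..<N], ISO True (m1,N) [0..<N], ISO False (n,N) [0..<N]]]
               else [[ISO True (Suc n,N) [0..<N], ISO False (n,N) [0..<N]], [ISO True (m1,N) [0..<N], ISO False (n,N) [0..<N]]])" for c
  proof
    assume "check_holds A I S3 N c"
    then obtain w where w: "\<forall>i. w i \<in> A" "\<forall>z\<in>A. \<forall>it\<in>set c. item_sat I S3 (w(N+3 := z)) it"
      using chk_yes by blast
    have all: "\<forall>it\<in>set c. item_sat I S3 (w(N+3 := w 0)) it" using w by blast
    show False using all c c0 c1 c2 w(1) by (auto simp: xv_upd3 split: if_splits)
  qed
  show ?case
  proof (intro exI[of _ S3] conjI allI impI ballI)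
    fix X assume "\<not> inR N n (fst (tr N n pol (FAnd p q))) X"
    then have "\<not> inR N n m2 X" using trv by simp
    then have "X \<noteq> (n,N)" "\<not> inR N m1 m2 X" "\<not> inR N (Suc n) m1 X" using m by auto
    then show "S3 X = S X" unfolding S3_def using S2(1)[rule_format, of X] S1(1)[rule_format, of X] by simp
  next
    fix j assume "n \<le> j \<and> j < fst (tr N n pol (FAnd p q))"
    then have j: "n \<le> j" "j < m2" using trv by auto
    show "rel_on A N (S3 (j,N))"
    proof (cases "j = n")
      case True then show ?thesis unfolding S3_def using Tr_rel by simp
    next
      case False
      show ?thesis
      proof (cases "j < m1")
        case True
        then have "S3 (j,N) = S1 (j,N)" unfolding S3_def using False S2(1)[rule_format, of "(j,N)"] by simp
        then show ?thesis using S1(2) True False j by simp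
      next
        case nt: False
        then have "S3 (j,N) = S2 (j,N)" unfolding S3_def using False by simp
        then show ?thesis using S2(2) nt j by simp
      qed
    qed
  next
    fix w :: "nat \<Rightarrow> 'a" assume "\<forall>i. w i \<in> A"
    then show "S3 (n,N) (map w [0..<N]) = (fo_sat A I S w (FAnd p q) = pol)" using c0 by blast
  next
    fix c assume "c \<in> set (snd (tr N n pol (FAnd p q)))"
    then show "\<not> check_holds A I S3 N c" using ch1 ch2 loc trv by auto
  qed
next
  case (FOr p q)
  define m1 where "m1 = fst (tr N (Suc n) pol p)"
  define m2 where "m2 = fst (tr N m1 pol q)"
  have m: "Suc n < m1" "m1 < m2" using tr_mono m1_def m2_def by auto
  have trv: "tr N n pol (FOr p q) = (m2, (if pol then [[ISO True (Suc n,N) [0..<N], ISO False (n,N) [0..<N]], [ISO True (m1,N) [0..<N], ISO False (n,N) [0..<N]]]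
               else [[ISO True (Suc n,N) [0..<N], ISO True (m1,N) [0..<N], ISO False (n,N) [0..<N]]]) @ snd (tr N (Suc n) pol p) @ snd (tr N m1 pol q))"
    by (simp add: Let_def m1_def m2_def)
  have vbp: "vb p \<le> N" "vb q \<le> N" using FOr.prems by auto
  have u: "\<forall>X\<in>svs p \<union> svs q. fst X < n" using FOr.prems(2) by simp
  have sp1: "\<forall>X\<in>svs p. fst X < Suc n" using u by (meson UnI1 less_SucI)
  have sp2: "\<forall>X\<in>svs q. fst X < m1" using u m by (meson UnI2 less_SucI less_trans)
  note sp = sp1 sp2
  have "\<exists>S1. (\<forall>X. \<not> inR N (Suc n) m1 X \<longrightarrow> S1 X = S X)
     \<and> (\<forall>j. Suc n \<le> j \<and> j < m1 \<longrightarrow> rel_on A N (S1 (j,N)))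
     \<and> (\<forall>w. (\<forall>i. w i \<in> A) \<longrightarrow> S1 (Suc n,N) (map w [0..<N]) = (fo_sat A I S w p = pol))
     \<and> (\<forall>c\<in>set (snd (tr N (Suc n) pol p)). \<not> check_holds A I S1 N c)"
    unfolding m1_def by (rule FOr.IH(1)[OF vbp(1) sp(1)])
  then obtain S1 where S1: "\<forall>X. \<not> inR N (Suc n) m1 X \<longrightarrow> S1 X = S X"
     "\<forall>j. Suc n \<le> j \<and> j < m1 \<longrightarrow> rel_on A N (S1 (j,N))"
     "\<forall>w. (\<forall>i. w i \<in> A) \<longrightarrow> S1 (Suc n,N) (map w [0..<N]) = (fo_sat A I S w p = pol)"
     "\<forall>c\<in>set (snd (tr N (Suc n) pol p)). \<not> check_holds A I S1 N c"
    by blast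
  have "\<exists>S2. (\<forall>X. \<not> inR N m1 m2 X \<longrightarrow> S2 X = S1 X)
     \<and> (\<forall>j. m1 \<le> j \<and> j < m2 \<longrightarrow> rel_on A N (S2 (j,N)))
     \<and> (\<forall>w. (\<forall>i. w i \<in> A) \<longrightarrow> S2 (m1,N) (map w [0..<N]) = (fo_sat A I S1 w q = pol))
     \<and> (\<forall>c\<in>set (snd (tr N m1 pol q)). \<not> check_holds A I S2 N c)"
    unfolding m2_def by (rule FOr.IH(2)[OF vbp(2) sp(2)])
  then obtain S2 where S2: "\<forall>X. \<not> inR N m1 m2 X \<longrightarrow> S2 X = S1 X"
     "\<forall>j. m1 \<le> j \<and> j < m2 \<longrightarrow> rel_on A N (S2 (j,N))"
     "\<forall>w. (\<forall>i. w i \<in> A) \<longrightarrow> S2 (m1,N) (map w [0..<N]) = (fo_sat A I S1 w q = pol)"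
     "\<forall>c\<in>set (snd (tr N m1 pol q)). \<not> check_holds A I S2 N c"
    by blast
  define S3 where "S3 = S2((n,N) := Tr A I S N (FOr p q) pol)"
  have q1: "fo_sat A I S1 w q = fo_sat A I S w q" for w
  proof (intro fo_sat_cong_S ballI)
    fix X assume "X \<in> svs q"
    then have "fst X < n" using FOr.prems(2) by auto
    then show "S1 X = S X" using S1(1)[rule_format, of X] by simp
  qed
  have c1: "\<forall>w. (\<forall>i. w i \<in> A) \<longrightarrow> S3 (Suc n,N) (map w [0..<N]) = (fo_sat A I S w p = pol)"
    using S1(3) S2(1) m unfolding S3_def by auto
  have c2: "\<forall>w. (\<forall>i. w i \<in> A) \<longrightarrow> S3 (m1,N) (map w [0..<N]) = (fo_sat A I S w q = pol)"
    using S2(3) q1 m unfolding S3_def by auto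
  have c0: "\<forall>w. (\<forall>i. w i \<in> A) \<longrightarrow> S3 (n,N) (map w [0..<N]) = (fo_sat A I S w (FOr p q) = pol)"
    unfolding S3_def fun_upd_same using Tr_map[OF FOr.prems(1)] by blast
  have ch1: "\<forall>c\<in>set (snd (tr N (Suc n) pol p)). \<not> check_holds A I S3 N c"
  proof
    fix c assume c: "c \<in> set (snd (tr N (Suc n) pol p))"
    have "\<forall>it\<in>set c. \<forall>X\<in>isv it. S3 X = S1 X"
    proof (intro ballI)
      fix it X assume "it \<in> set c" "X \<in> isv it"
      then have "X \<in> svs p \<or> inR N (Suc n) m1 X" using tr_isv[OF c] m1_def by blast
      then have "fst X < n \<or> inR N (Suc n) m1 X" using u by blast
      then have "X \<noteq> (n,N)" "\<not> inR N m1 m2 X" using m by auto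
      then show "S3 X = S1 X" unfolding S3_def using S2(1)[rule_format, of X] by simp
    qed
    then show "\<not> check_holds A I S3 N c" using check_holds_cong S1(4) c by metis
  qed
  have ch2: "\<forall>c\<in>set (snd (tr N m1 pol q)). \<not> check_holds A I S3 N c"
  proof
    fix c assume c: "c \<in> set (snd (tr N m1 pol q))"
    have "\<forall>it\<in>set c. \<forall>X\<in>isv it. S3 X = S2 X"
    proof (intro ballI)
      fix it X assume "it \<in> set c" "X \<in> isv it"
      then have "X \<in> svs q \<or> inR N m1 m2 X" using tr_isv[OF c] m2_def by blast
      then have "fst X < n \<or> inR N m1 m2 X" using u by blast
      then have "X \<noteq> (n,N)" using m by auto
      then show "S3 X = S2 X" unfolding S3_def by simp
    qed
    then show "\<not> check_holds A I S3 N c" using check_holds_cong S2(4) c by metis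
  qed
  have loc: "\<not> check_holds A I S3 N c" if c: "c \<in> set (if pol then [[ISO True (Suc n,N) [0..<N], ISO False (n,N) [0..<N]], [ISO True (m1,N) [0..<N], ISO False (n,N) [0..<N]]]
               else [[ISO True (Suc n,N) [0..<N], ISO True (m1,N) [0..<N], ISO False (n,N) [0..<N]]])" for c
  proof
    assume "check_holds A I S3 N c"
    then obtain w where w: "\<forall>i. w i \<in> A" "\<forall>z\<in>A. \<forall>it\<in>set c. item_sat I S3 (w(N+3 := z)) it"
      using chk_yes by blast
    have all: "\<forall>it\<in>set c. item_sat I S3 (w(N+3 := w 0)) it" using w by blast
    show False using all c c0 c1 c2 w(1) by (auto simp: xv_upd3 split: if_splits)
  qed
  show ?case
  proof (intro exI[of _ S3] conjI allI impI ballI)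
    fix X assume "\<not> inR N n (fst (tr N n pol (FOr p q))) X"
    then have "\<not> inR N n m2 X" using trv by simp
    then have "X \<noteq> (n,N)" "\<not> inR N m1 m2 X" "\<not> inR N (Suc n) m1 X" using m by auto
    then show "S3 X = S X" unfolding S3_def using S2(1)[rule_format, of X] S1(1)[rule_format, of X] by simp
  next
    fix j assume "n \<le> j \<and> j < fst (tr N n pol (FOr p q))"
    then have j: "n \<le> j" "j < m2" using trv by auto
    show "rel_on A N (S3 (j,N))"
    proof (cases "j = n")
      case True then show ?thesis unfolding S3_def using Tr_rel by simp
    next
      case False
      show ?thesis
      proof (cases "j < m1")
        case True
        then have "S3 (j,N) = S1 (j,N)" unfolding S3_def using False S2(1)[rule_format, of "(j,N)"] by simp
        then show ?thesis using S1(2) True False j by simp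
      next
        case nt: False
        then have "S3 (j,N) = S2 (j,N)" unfolding S3_def using False by simp
        then show ?thesis using S2(2) nt j by simp
      qed
    qed
  next
    fix w :: "nat \<Rightarrow> 'a" assume "\<forall>i. w i \<in> A"
    then show "S3 (n,N) (map w [0..<N]) = (fo_sat A I S w (FOr p q) = pol)" using c0 by blast
  next
    fix c assume "c \<in> set (snd (tr N n pol (FOr p q)))"
    then show "\<not> check_holds A I S3 N c" using ch1 ch2 loc trv by auto
  qed
next
  case (FEx x p)
  define m1 where "m1 = fst (tr N (Suc n) pol p)"
  have m: "Suc n < m1" using tr_mono m1_def by auto
  have xN: "x < N" using FEx.prems(1) by simp
  have trv: "tr N n pol (FEx x p) = (m1, [ISO True (Suc n,N) ([0..<N][x := (if pol then N else N+3)]), ISO False (n,N) [0..<N]] # snd (tr N (Suc n) pol p))"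
    by (simp add: Let_def m1_def)
  have vbp: "vb p \<le> N" using FEx.prems by auto
  have u: "\<forall>X\<in>svs p. fst X < n" using FEx.prems(2) by simp
  have sp1: "\<forall>X\<in>svs p. fst X < Suc n" using u by (meson less_SucI)
  have "\<exists>S1. (\<forall>X. \<not> inR N (Suc n) m1 X \<longrightarrow> S1 X = S X)
     \<and> (\<forall>j. Suc n \<le> j \<and> j < m1 \<longrightarrow> rel_on A N (S1 (j,N)))
     \<and> (\<forall>w. (\<forall>i. w i \<in> A) \<longrightarrow> S1 (Suc n,N) (map w [0..<N]) = (fo_sat A I S w p = pol))
     \<and> (\<forall>c\<in>set (snd (tr N (Suc n) pol p)). \<not> check_holds A I S1 N c)"
    unfolding m1_def by (rule FEx.IH[OF vbp sp1])
  then obtain S1 where S1: "\<forall>X. \<not> inR N (Suc n) m1 X \<longrightarrow> S1 X = S X"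
     "\<forall>j. Suc n \<le> j \<and> j < m1 \<longrightarrow> rel_on A N (S1 (j,N))"
     "\<forall>w. (\<forall>i. w i \<in> A) \<longrightarrow> S1 (Suc n,N) (map w [0..<N]) = (fo_sat A I S w p = pol)"
     "\<forall>c\<in>set (snd (tr N (Suc n) pol p)). \<not> check_holds A I S1 N c"
    by blast
  define S3 where "S3 = S1((n,N) := Tr A I S N (FEx x p) pol)"
  have c1: "\<forall>w. (\<forall>i. w i \<in> A) \<longrightarrow> S3 (Suc n,N) (map w [0..<N]) = (fo_sat A I S w p = pol)"
    using S1(3) unfolding S3_def by auto
  have c0: "\<forall>w. (\<forall>i. w i \<in> A) \<longrightarrow> S3 (n,N) (map w [0..<N]) = (fo_sat A I S w (FEx x p) = pol)"
    unfolding S3_def fun_upd_same using Tr_map[OF FEx.prems(1)] by blast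
  have ch1: "\<forall>c\<in>set (snd (tr N (Suc n) pol p)). \<not> check_holds A I S3 N c"
  proof
    fix c assume c: "c \<in> set (snd (tr N (Suc n) pol p))"
    have "\<forall>it\<in>set c. \<forall>X\<in>isv it. S3 X = S1 X"
    proof (intro ballI)
      fix it X assume "it \<in> set c" "X \<in> isv it"
      then have "X \<in> svs p \<or> inR N (Suc n) m1 X" using tr_isv[OF c] m1_def by blast
      then have "fst X < n \<or> inR N (Suc n) m1 X" using u by blast
      then have "X \<noteq> (n,N)" by auto
      then show "S3 X = S1 X" unfolding S3_def by simp
    qed
    then show "\<not> check_holds A I S3 N c" using check_holds_cong S1(4) c by metis
  qed
  have loc: "\<not> check_holds A I S3 N [ISO True (Suc n,N) ([0..<N][x := (if pol then N else N+3)]), ISO False (n,N) [0..<N]]"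
  proof
    assume "check_holds A I S3 N [ISO True (Suc n,N) ([0..<N][x := (if pol then N else N+3)]), ISO False (n,N) [0..<N]]"
    then obtain w where w: "\<forall>i. w i \<in> A" "\<forall>z\<in>A. \<forall>it\<in>set [ISO True (Suc n,N) ([0..<N][x := (if pol then N else N+3)]), ISO False (n,N) [0..<N]]. item_sat I S3 (w(N+3 := z)) it"
      using chk_yes by blast
    have i2: "\<not> S3 (n,N) (map w [0..<N])" using w(2) w(1) by (auto simp: xv_upd3)
    have i1: "S3 (Suc n,N) (map (w(N+3:=z)) ([0..<N][x := (if pol then N else N+3)]))" if "z \<in> A" for z
      using w(2) that by auto
    show False
    proof (cases pol)
      case True
      have e: "map (w(N+3:=w 0)) ([0..<N][x := N]) = map (w(x:=w N)) [0..<N]"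
        using map_upd2[OF xN order_refl, of "w(N+3:=w 0)" w] by simp
      have "S3 (Suc n,N) (map (w(x:=w N)) [0..<N])" using i1[of "w 0"] e True w(1) by simp
      then have "fo_sat A I S (w(x:=w N)) p" using c1 True w(1) by simp
      then have "fo_sat A I S w (FEx x p)" using w(1) by auto
      then show False using c0 i2 True w(1) by simp
    next
      case False
      have "fo_sat A I S (w(x:=z)) p = False" if "z \<in> A" for z
      proof -
        have e: "map (w(N+3:=z)) ([0..<N][x := N+3]) = map (w(x:=z)) [0..<N]"
          using map_upd2[OF xN, of "N+3" "w(N+3:=z)" w] by simp
        have "S3 (Suc n,N) (map (w(x:=z)) [0..<N])" using i1[OF that] e False by simp
        then show ?thesis using c1 False w(1) that by simp
      qed
      then have "fo_sat A I S w (FEx x p) = False" by auto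
      then show False using c0 i2 False w(1) by simp
    qed
  qed
  show ?case
  proof (intro exI[of _ S3] conjI allI impI ballI)
    fix X assume "\<not> inR N n (fst (tr N n pol (FEx x p))) X"
    then have "\<not> inR N n m1 X" using trv by simp
    then have "X \<noteq> (n,N)" "\<not> inR N (Suc n) m1 X" using m by auto
    then show "S3 X = S X" unfolding S3_def using S1(1)[rule_format, of X] by simp
  next
    fix j assume "n \<le> j \<and> j < fst (tr N n pol (FEx x p))"
    then have j: "n \<le> j" "j < m1" using trv by auto
    show "rel_on A N (S3 (j,N))"
    proof (cases "j = n")
      case True then show ?thesis unfolding S3_def using Tr_rel by simp
    next
      case False
      then have "S3 (j,N) = S1 (j,N)" unfolding S3_def by simp
      then show ?thesis using S1(2) False j by simp
    qed
  next
    fix w :: "nat \<Rightarrow> 'a" assume "\<forall>i. w i \<in> A"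
    then show "S3 (n,N) (map w [0..<N]) = (fo_sat A I S w (FEx x p) = pol)" using c0 by blast
  next
    fix c assume "c \<in> set (snd (tr N n pol (FEx x p)))"
    then show "\<not> check_holds A I S3 N c" using ch1 loc trv by auto
  qed
next
  case (FAll x p)
  define m1 where "m1 = fst (tr N (Suc n) pol p)"
  have m: "Suc n < m1" using tr_mono m1_def by auto
  have xN: "x < N" using FAll.prems(1) by simp
  have trv: "tr N n pol (FAll x p) = (m1, [ISO True (Suc n,N) ([0..<N][x := (if pol then N+3 else N)]), ISO False (n,N) [0..<N]] # snd (tr N (Suc n) pol p))"
    by (simp add: Let_def m1_def)
  have vbp: "vb p \<le> N" using FAll.prems by auto
  have u: "\<forall>X\<in>svs p. fst X < n" using FAll.prems(2) by simp
  have sp1: "\<forall>X\<in>svs p. fst X < Suc n" using u by (meson less_SucI)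
  have "\<exists>S1. (\<forall>X. \<not> inR N (Suc n) m1 X \<longrightarrow> S1 X = S X)
     \<and> (\<forall>j. Suc n \<le> j \<and> j < m1 \<longrightarrow> rel_on A N (S1 (j,N)))
     \<and> (\<forall>w. (\<forall>i. w i \<in> A) \<longrightarrow> S1 (Suc n,N) (map w [0..<N]) = (fo_sat A I S w p = pol))
     \<and> (\<forall>c\<in>set (snd (tr N (Suc n) pol p)). \<not> check_holds A I S1 N c)"
    unfolding m1_def by (rule FAll.IH[OF vbp sp1])
  then obtain S1 where S1: "\<forall>X. \<not> inR N (Suc n) m1 X \<longrightarrow> S1 X = S X"
     "\<forall>j. Suc n \<le> j \<and> j < m1 \<longrightarrow> rel_on A N (S1 (j,N))"
     "\<forall>w. (\<forall>i. w i \<in> A) \<longrightarrow> S1 (Suc n,N) (map w [0..<N]) = (fo_sat A I S w p = pol)"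
     "\<forall>c\<in>set (snd (tr N (Suc n) pol p)). \<not> check_holds A I S1 N c"
    by blast
  define S3 where "S3 = S1((n,N) := Tr A I S N (FAll x p) pol)"
  have c1: "\<forall>w. (\<forall>i. w i \<in> A) \<longrightarrow> S3 (Suc n,N) (map w [0..<N]) = (fo_sat A I S w p = pol)"
    using S1(3) unfolding S3_def by auto
  have c0: "\<forall>w. (\<forall>i. w i \<in> A) \<longrightarrow> S3 (n,N) (map w [0..<N]) = (fo_sat A I S w (FAll x p) = pol)"
    unfolding S3_def fun_upd_same using Tr_map[OF FAll.prems(1)] by blast
  have ch1: "\<forall>c\<in>set (snd (tr N (Suc n) pol p)). \<not> check_holds A I S3 N c"
  proof
    fix c assume c: "c \<in> set (snd (tr N (Suc n) pol p))"
    have "\<forall>it\<in>set c. \<forall>X\<in>isv it. S3 X = S1 X"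
    proof (intro ballI)
      fix it X assume "it \<in> set c" "X \<in> isv it"
      then have "X \<in> svs p \<or> inR N (Suc n) m1 X" using tr_isv[OF c] m1_def by blast
      then have "fst X < n \<or> inR N (Suc n) m1 X" using u by blast
      then have "X \<noteq> (n,N)" by auto
      then show "S3 X = S1 X" unfolding S3_def by simp
    qed
    then show "\<not> check_holds A I S3 N c" using check_holds_cong S1(4) c by metis
  qed
  have loc: "\<not> check_holds A I S3 N [ISO True (Suc n,N) ([0..<N][x := (if pol then N+3 else N)]), ISO False (n,N) [0..<N]]"
  proof
    assume "check_holds A I S3 N [ISO True (Suc n,N) ([0..<N][x := (if pol then N+3 else N)]), ISO False (n,N) [0..<N]]"
    then obtain w where w: "\<forall>i. w i \<in> A" "\<forall>z\<in>A. \<forall>it\<in>set [ISO True (Suc n,N) ([0..<N][x := (if pol then N+3 else N)]), ISO False (n,N) [0..<N]]. item_sat I S3 (w(N+3 := z)) it"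
      using chk_yes by blast
    have i2: "\<not> S3 (n,N) (map w [0..<N])" using w(2) w(1) by (auto simp: xv_upd3)
    have i1: "S3 (Suc n,N) (map (w(N+3:=z)) ([0..<N][x := (if pol then N+3 else N)]))" if "z \<in> A" for z
      using w(2) that by auto
    show False
    proof (cases pol)
      case False
      have e: "map (w(N+3:=w 0)) ([0..<N][x := N]) = map (w(x:=w N)) [0..<N]"
        using map_upd2[OF xN order_refl, of "w(N+3:=w 0)" w] by simp
      have "S3 (Suc n,N) (map (w(x:=w N)) [0..<N])" using i1[of "w 0"] e False w(1) by simp
      then have "\<not> fo_sat A I S (w(x:=w N)) p" using c1 False w(1) by simp
      then have "\<not> fo_sat A I S w (FAll x p)" using w(1) by auto
      then show False using c0 i2 False w(1) by simp
    next
      case True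
      have "fo_sat A I S (w(x:=z)) p = True" if "z \<in> A" for z
      proof -
        have e: "map (w(N+3:=z)) ([0..<N][x := N+3]) = map (w(x:=z)) [0..<N]"
          using map_upd2[OF xN, of "N+3" "w(N+3:=z)" w] by simp
        have "S3 (Suc n,N) (map (w(x:=z)) [0..<N])" using i1[OF that] e True by simp
        then show ?thesis using c1 True w(1) that by simp
      qed
      then have "fo_sat A I S w (FAll x p) = True" by auto
      then show False using c0 i2 True w(1) by simp
    qed
  qed
  show ?case
  proof (intro exI[of _ S3] conjI allI impI ballI)
    fix X assume "\<not> inR N n (fst (tr N n pol (FAll x p))) X"
    then have "\<not> inR N n m1 X" using trv by simp
    then have "X \<noteq> (n,N)" "\<not> inR N (Suc n) m1 X" using m by auto
    then show "S3 X = S X" unfolding S3_def using S1(1)[rule_format, of X] by simp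
  next
    fix j assume "n \<le> j \<and> j < fst (tr N n pol (FAll x p))"
    then have j: "n \<le> j" "j < m1" using trv by auto
    show "rel_on A N (S3 (j,N))"
    proof (cases "j = n")
      case True then show ?thesis unfolding S3_def using Tr_rel by simp
    next
      case False
      then have "S3 (j,N) = S1 (j,N)" unfolding S3_def by simp
      then show ?thesis using S1(2) False j by simp
    qed
  next
    fix w :: "nat \<Rightarrow> 'a" assume "\<forall>i. w i \<in> A"
    then show "S3 (n,N) (map w [0..<N]) = (fo_sat A I S w (FAll x p) = pol)" using c0 by blast
  next
    fix c assume "c \<in> set (snd (tr N n pol (FAll x p)))"
    then show "\<not> check_holds A I S3 N c" using ch1 loc trv by auto
  qed
qed



definition GA :: "nat \<Rightarrow> nat list" where "GA N = [0..<N+3]"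
definition gv :: "nat \<Rightarrow> nat \<Rightarrow> nat \<Rightarrow> svar" where "gv N g0 i = (g0 + i, N + 3)"

definition top_cl :: "nat \<Rightarrow> nat \<Rightarrow> clause" where
  "top_cl N g0 = ([LEq True (N+1) (N+2)], HNonempty (gv N g0 0), HBot)"

definition item_cl :: "nat \<Rightarrow> nat \<Rightarrow> nat \<Rightarrow> item \<Rightarrow> clause" where
  "item_cl N g0 i it = (case it of
      ITau l \<Rightarrow> ([l, LEq False (N+1) (N+2)], HNeg (gv N g0 i) (GA N), HBot)
    | ISO b X xs \<Rightarrow> ([LEq False (N+1) (N+2)], HNeg (gv N g0 i) (GA N), if b then HPos X xs else HNeg X xs))"

definition chain_cl :: "nat \<Rightarrow> nat \<Rightarrow> nat \<Rightarrow> nat \<Rightarrow> clause" where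
  "chain_cl N g0 L i = ([LEq True (N+1) (N+2)], HNeg (gv N g0 i) (GA N),
      if Suc i < L then HNonempty (gv N g0 (Suc i)) else HBot)"

definition mux :: "nat \<Rightarrow> nat \<Rightarrow> item list list \<Rightarrow> clause list" where
  "mux N g0 chks = top_cl N g0 # concat (map (\<lambda>i. map (item_cl N g0 i) (chks ! i) @ [chain_cl N g0 (length chks) i]) [0..<length chks])"

definition wdom :: "'a set \<Rightarrow> nat list \<Rightarrow> (nat \<Rightarrow> 'a) \<Rightarrow> bool" where
  "wdom A xs w \<longleftrightarrow> (\<forall>x. x \<notin> set xs \<longrightarrow> w x = (SOME a. a \<in> A)) \<and> (\<forall>x\<in>set xs. w x \<in> A)"

lemma item_cl_sat: "clause_sat A I S w (item_cl N g0 i it) \<longleftrightarrow>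
   (w (N+1) \<noteq> w (N+2) \<or> \<not> S (gv N g0 i) (map w (GA N)) \<or> item_sat I S w it)"
  by (cases it) (auto simp: clause_sat_def item_cl_def)

lemma chain_cl_sat: "clause_sat A I S w (chain_cl N g0 L i) \<longleftrightarrow>
   (w (N+1) = w (N+2) \<or> \<not> S (gv N g0 i) (map w (GA N)) \<or>
     (Suc i < L \<and> (\<exists>ts. length ts = N+3 \<and> set ts \<subseteq> A \<and> S (gv N g0 (Suc i)) ts)))"
  by (auto simp: clause_sat_def chain_cl_def gv_def)

lemma top_cl_sat: "clause_sat A I S w (top_cl N g0) \<longleftrightarrow>
   (w (N+1) = w (N+2) \<or> (\<exists>ts. length ts = N+3 \<and> set ts \<subseteq> A \<and> S (gv N g0 0) ts))"
  by (auto simp: clause_sat_def top_cl_def gv_def)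

lemma mux_mem: "c \<in> set (mux N g0 chks) \<longleftrightarrow> c = top_cl N g0 \<or>
   (\<exists>i<length chks. (\<exists>it\<in>set (chks!i). c = item_cl N g0 i it) \<or> c = chain_cl N g0 (length chks) i)"
  by (auto simp: mux_def)

lemma map_GA: "length ts = N + 3 \<Longrightarrow> map (\<lambda>x. if x < N+3 then ts ! x else d) (GA N) = ts"
  by (intro nth_equalityI) (auto simp: GA_def)

lemma mux_sound:
  assumes "a \<in> A" "b \<in> A" "a \<noteq> b" "0 < length chks"
    and cl: "\<forall>w. wdom A [0..<N+4] w \<longrightarrow> (\<forall>c\<in>set (mux N g0 chks). clause_sat A I S w c)"
  shows "\<exists>i<length chks. check_holds A I S N (chks!i)"
proof -
  define L where "L = length chks"
  define d0 where "d0 = (SOME a. a \<in> A)"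
  have d0: "d0 \<in> A" using assms(1) unfolding d0_def by (metis someI)
  have step: "\<forall>j<L. L - j \<le> d \<longrightarrow> (\<exists>ts. length ts = N+3 \<and> set ts \<subseteq> A \<and> S (gv N g0 j) ts) \<longrightarrow> (\<exists>i<L. check_holds A I S N (chks!i))" for d
  proof (induction d)
    case 0 then show ?case by auto
  next
    case (Suc d)
    show ?case
    proof (intro allI impI)
      fix j assume j: "j < L" "L - j \<le> Suc d" and "\<exists>ts. length ts = N+3 \<and> set ts \<subseteq> A \<and> S (gv N g0 j) ts"
      then obtain ts where ts: "length ts = N+3" "set ts \<subseteq> A" "S (gv N g0 j) ts" by blast
      define w where "w = (\<lambda>x. if x < N+3 then ts ! x else d0)"
      have mw: "map w (GA N) = ts" using map_GA[OF ts(1)] unfolding w_def by simp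
      have wA: "\<forall>i. w i \<in> A" using ts d0 unfolding w_def by (auto simp: nth_mem subset_iff)
      have wd: "wdom A [0..<N+4] (w(N+3:=z))" if "z \<in> A" for z
      proof -
        have "\<forall>x. (w(N+3:=z)) x \<in> A" using wA that by simp
        moreover have "\<forall>x. x \<notin> set [0..<N+4] \<longrightarrow> (w(N+3:=z)) x = (SOME a. a \<in> A)" by (simp add: w_def d0_def)
        ultimately show ?thesis unfolding wdom_def by blast
      qed
      have mwz: "map (w(N+3:=z)) (GA N) = ts" for z using mw by (simp add: GA_def)
      show "\<exists>i<L. check_holds A I S N (chks!i)"
      proof (cases "ts ! (N+1) = ts ! (N+2)")
        case True
        have "\<forall>z\<in>A. \<forall>it\<in>set (chks!j). item_sat I S (w(N+3:=z)) it"
        proof (intro ballI)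
          fix z it assume z: "z \<in> A" and it: "it \<in> set (chks!j)"
          have "item_cl N g0 j it \<in> set (mux N g0 chks)" using it j unfolding mux_mem L_def by blast
          then have "clause_sat A I S (w(N+3:=z)) (item_cl N g0 j it)" using cl wd[OF z] by blast
          then show "item_sat I S (w(N+3:=z)) it" using True ts(3) mwz[of z] unfolding item_cl_sat w_def by simp
        qed
        then have "check_holds A I S N (chks!j)" unfolding check_holds_def using wA by blast
        then show ?thesis using j by blast
      next
        case False
        have "chain_cl N g0 L j \<in> set (mux N g0 chks)" using j unfolding mux_mem L_def by blast
        then have "clause_sat A I S (w(N+3:=d0)) (chain_cl N g0 L j)" using cl wd[OF d0] by blast
        then have "Suc j < L \<and> (\<exists>ts. length ts = N+3 \<and> set ts \<subseteq> A \<and> S (gv N g0 (Suc j)) ts)"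
          using False ts(3) mwz[of d0] unfolding chain_cl_sat w_def by simp
        then show ?thesis using Suc.IH j by auto
      qed
    qed
  qed
  define w where "w = (\<lambda>x. if x = N+2 then b else if x < N+4 then a else d0)"
  have "wdom A [0..<N+4] w" using assms(1,2) unfolding wdom_def w_def d0_def by auto
  moreover have "top_cl N g0 \<in> set (mux N g0 chks)" unfolding mux_mem by simp
  ultimately have "clause_sat A I S w (top_cl N g0)" using cl by blast
  then have "\<exists>ts. length ts = N+3 \<and> set ts \<subseteq> A \<and> S (gv N g0 0) ts"
    using assms(3) unfolding top_cl_sat w_def by simp
  then show ?thesis using step[of L] assms(4) unfolding L_def by auto
qed


lemma GA_nth: "x < N + 3 \<Longrightarrow> map w (GA N) ! x = w x"
  by (simp add: GA_def)

lemma mux_complete: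
  assumes ab: "a \<in> A" "b \<in> A" "a \<noteq> b" and j: "j < length chks" and ch: "check_holds A I S N (chks!j)"
    and sv: "\<forall>i<length chks. \<forall>it\<in>set(chks!i). \<forall>X\<in>isv it. fst X < g0"
    and iv: "\<forall>i<length chks. \<forall>it\<in>set(chks!i). \<forall>x\<in>ivars it. x \<le> N \<or> x = N+3"
  shows "\<exists>S'. (\<forall>X. (\<forall>i<length chks. X \<noteq> gv N g0 i) \<longrightarrow> S' X = S X)
     \<and> (\<forall>i<length chks. rel_on A (N+3) (S' (gv N g0 i)))
     \<and> (\<forall>w. wdom A [0..<N+4] w \<longrightarrow> (\<forall>c\<in>set (mux N g0 chks). clause_sat A I S' w c))"
proof -
  define L where "L = length chks"
  obtain w0 where w0: "\<forall>i. w0 i \<in> A" "\<forall>z\<in>A. \<forall>it\<in>set (chks!j). item_sat I S (w0(N+3 := z)) it"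
    using ch unfolding check_holds_def by blast
  define tab where "tab = replicate (N+1) a @ [a,b]"
  define tj where "tj = map w0 [0..<N+1] @ [a,a]"
  have tab: "length tab = N+3" "set tab \<subseteq> A" "tab ! (N+1) = a" "tab ! (N+2) = b"
    using ab unfolding tab_def by (auto simp: nth_append)
  have tj: "length tj = N+3" "set tj \<subseteq> A" "tj ! (N+1) = a" "tj ! (N+2) = a" "\<And>x. x \<le> N \<Longrightarrow> tj ! x = w0 x"
    using ab w0(1) unfolding tj_def by (auto simp: nth_append)
  define Gval where "Gval i = (if i < j then (\<lambda>ts. ts = tab) else if i = j then (\<lambda>ts. ts = tj) else (\<lambda>_. False))" for i
  define S' where "S' X = (if snd X = N+3 \<and> g0 \<le> fst X \<and> fst X < g0 + L then Gval (fst X - g0) else S X)" for X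
  have SG: "S' (gv N g0 i) = Gval i" if "i < L" for i using that unfolding S'_def gv_def by simp
  have Sout: "S' X = S X" if "fst X < g0" for X using that unfolding S'_def by simp
  have ne: "\<exists>ts. length ts = N+3 \<and> set ts \<subseteq> A \<and> S' (gv N g0 i) ts" if "i \<le> j" for i
  proof -
    have "i < L" using that j unfolding L_def by simp
    then show ?thesis using SG tab tj that unfolding Gval_def by (cases "i < j") auto
  qed
  show ?thesis
  proof (intro exI[of _ S'] conjI allI impI ballI)
    fix X assume X: "\<forall>i<length chks. X \<noteq> gv N g0 i"
    show "S' X = S X"
    proof (rule ccontr)
      assume "S' X \<noteq> S X"
      then have c: "snd X = N+3" "g0 \<le> fst X" "fst X < g0 + L" unfolding S'_def by (auto split: if_splits)
      then have "X = gv N g0 (fst X - g0)" unfolding gv_def by (cases X) auto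
      then show False using X c unfolding L_def by auto
    qed
  next
    fix i assume "i < length chks"
    then show "rel_on A (N+3) (S' (gv N g0 i))" using SG tab tj unfolding Gval_def rel_on_def L_def by auto
  next
    fix w c assume wd: "wdom A [0..<N+4] w" and c: "c \<in> set (mux N g0 chks)"
    have wN3: "w (N+3) \<in> A" using wd unfolding wdom_def by simp
    have sel: "map w (GA N) ! (N+1) = w (N+1)" "map w (GA N) ! (N+2) = w (N+2)" by (simp_all add: GA_nth)
    from c[unfolded mux_mem] consider (t) "c = top_cl N g0"
      | (itc) i it where "i < length chks" "it \<in> set (chks!i)" "c = item_cl N g0 i it"
      | (chc) i where "i < length chks" "c = chain_cl N g0 (length chks) i" by blast
    then show "clause_sat A I S' w c"
    proof cases
      case t
      then show ?thesis using ne[of 0] top_cl_sat[of A I S' w N g0] by simp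
    next
      case (itc i it)
      note i = itc(1) and it = itc(2) and cc = itc(3)
      have "w (N+1) \<noteq> w (N+2) \<or> \<not> S' (gv N g0 i) (map w (GA N)) \<or> item_sat I S' w it"
      proof (cases "w (N+1) = w (N+2) \<and> S' (gv N g0 i) (map w (GA N))")
        case False then show ?thesis by blast
      next
        case True
        then have G: "Gval i (map w (GA N))" using SG i unfolding L_def by simp
        have "i = j"
        proof (rule ccontr)
          assume "i \<noteq> j"
          then have "i < j" "map w (GA N) = tab" using G unfolding Gval_def by (auto split: if_splits)
          then show False using True sel tab ab by metis
        qed
        then have mt: "map w (GA N) = tj" using G unfolding Gval_def by simp
        have agree: "w x = w0 x" if "x \<le> N" for x
        proof -
          have "w x = map w (GA N) ! x" using that by (simp add: GA_nth)
          also have "\<dots> = w0 x" using mt tj(5)[OF that] by simp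
          finally show ?thesis .
        qed
        have "item_sat I S (w0(N+3 := w (N+3))) it" using w0(2) wN3 it \<open>i = j\<close> by blast
        moreover have "item_sat I S (w0(N+3 := w (N+3))) it = item_sat I S' w it"
        proof (rule item_sat_cong)
          show "\<forall>x\<in>ivars it. (w0(N + 3 := w (N + 3))) x = w x"
            using iv i it agree by fastforce
          show "\<forall>X\<in>isv it. S X = S' X" using sv i it Sout by fastforce
        qed
        ultimately show ?thesis by simp
      qed
      then show ?thesis using cc item_cl_sat by metis
    next
      case (chc i)
      note i = chc(1) and cc = chc(2)
      have "w (N+1) = w (N+2) \<or> \<not> S' (gv N g0 i) (map w (GA N)) \<or>
             (Suc i < length chks \<and> (\<exists>ts. length ts = N+3 \<and> set ts \<subseteq> A \<and> S' (gv N g0 (Suc i)) ts))"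
      proof (cases "w (N+1) \<noteq> w (N+2) \<and> S' (gv N g0 i) (map w (GA N))")
        case False then show ?thesis by blast
      next
        case True
        then have G: "Gval i (map w (GA N))" using SG i unfolding L_def by simp
        have "i < j"
        proof (rule ccontr)
          assume "\<not> i < j"
          then have "i = j" "map w (GA N) = tj" using G unfolding Gval_def by (auto split: if_splits)
          then show False using True sel tj by metis
        qed
        then show ?thesis using ne[of "Suc i"] j by simp
      qed
      then show ?thesis using cc chain_cl_sat by metis
    qed
  qed
qed



fun sval :: "(rsym \<Rightarrow> bool) \<Rightarrow> (svar \<Rightarrow> bool) \<Rightarrow> fo \<Rightarrow> bool" where
  "sval \<sigma> B (FEq x y) = True"
| "sval \<sigma> B (FRel R xs) = \<sigma> R"
| "sval \<sigma> B (FSV X xs) = B X"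
| "sval \<sigma> B (FNot p) = (\<not> sval \<sigma> B p)"
| "sval \<sigma> B (FAnd p q) = (sval \<sigma> B p \<and> sval \<sigma> B q)"
| "sval \<sigma> B (FOr p q) = (sval \<sigma> B p \<or> sval \<sigma> B q)"
| "sval \<sigma> B (FEx x p) = sval \<sigma> B p"
| "sval \<sigma> B (FAll x p) = sval \<sigma> B p"

fun rels :: "fo \<Rightarrow> rsym list" where
  "rels (FEq x y) = []"
| "rels (FRel R xs) = [R]"
| "rels (FSV X xs) = []"
| "rels (FNot p) = rels p"
| "rels (FAnd p q) = rels p @ rels q"
| "rels (FOr p q) = rels p @ rels q"
| "rels (FEx x p) = rels p"
| "rels (FAll x p) = rels p"

lemma rels_wf: "wf_fo \<tau> V p \<Longrightarrow> R \<in> set (rels p) \<Longrightarrow> R \<in> \<tau>"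
  by (induction p) auto

lemma sval_cong: "(\<forall>R\<in>set (rels p). \<sigma> R = \<sigma>' R) \<Longrightarrow> sval \<sigma> B p = sval \<sigma>' B p"
  by (induction p) auto

lemma fo_sat_single: "wf_fo \<tau> V p \<Longrightarrow> (\<forall>i. v i = a) \<Longrightarrow>
  fo_sat {a} I S v p = sval (\<lambda>R. I R (replicate (snd R) a)) (\<lambda>X. S X (replicate (snd X) a)) p"
proof (induction p arbitrary: v)
  case (FRel R xs)
  have "v = (\<lambda>_. a)" using FRel by (intro ext) simp
  then have "map v xs = replicate (snd R) a" using FRel by (simp add: map_replicate_const)
  then show ?case by simp
next
  case (FSV X xs)
  have "v = (\<lambda>_. a)" using FSV by (intro ext) simp
  then have "map v xs = replicate (snd X) a" using FSV by (simp add: map_replicate_const)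
  then show ?case by simp
next
  case (FEx x p)
  have "fo_sat {a} I S (v(x:=a)) p = sval (\<lambda>R. I R (replicate (snd R) a)) (\<lambda>X. S X (replicate (snd X) a)) p"
    using FEx.prems by (intro FEx.IH) auto
  then show ?case by simp
next
  case (FAll x p)
  have "fo_sat {a} I S (v(x:=a)) p = sval (\<lambda>R. I R (replicate (snd R) a)) (\<lambda>X. S X (replicate (snd X) a)) p"
    using FAll.prems by (intro FAll.IH) auto
  then show ?case by simp
qed auto

fun sq :: "(bool \<times> svar) list \<Rightarrow> ((svar \<Rightarrow> bool) \<Rightarrow> bool) \<Rightarrow> (svar \<Rightarrow> bool) \<Rightarrow> bool" where
  "sq [] F B = F B"
| "sq ((True, X) # qs) F B = (\<exists>c. sq qs F (B(X := c)))"
| "sq ((False, X) # qs) F B = (\<forall>c. sq qs F (B(X := c)))"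

definition proj :: "'a \<Rightarrow> (svar \<Rightarrow> 'a list \<Rightarrow> bool) \<Rightarrow> svar \<Rightarrow> bool" where
  "proj a S = (\<lambda>X. S X (replicate (snd X) a))"

lemma proj_upd: "proj a (S(X := P)) = (proj a S)(X := P (replicate (snd X) a))"
  by (rule ext) (simp add: proj_def)

lemma q_sat_single: "q_sat {a} qs (\<lambda>S. F (proj a S)) S = sq qs F (proj a S)"
proof (induction qs arbitrary: S)
  case Nil then show ?case by simp
next
  case (Cons q qs)
  obtain b X where q: "q = (b,X)" by (cases q) auto
  have ex: "\<exists>P. rel_on {a} (snd X) P \<and> P (replicate (snd X) a) = c" for c
    by (intro exI[of _ "\<lambda>ts. ts = replicate (snd X) a \<and> c"]) (auto simp: rel_on_def)
  show ?case
  proof (cases b)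
    case True
    have "q_sat {a} (q#qs) (\<lambda>S. F (proj a S)) S = (\<exists>P. rel_on {a} (snd X) P \<and> sq qs F ((proj a S)(X := P (replicate (snd X) a))))"
      unfolding q by (simp only: True q_sat.simps Cons.IH proj_upd)
    also have "\<dots> = (\<exists>c. sq qs F ((proj a S)(X := c)))"
    proof
      assume "\<exists>P. rel_on {a} (snd X) P \<and> sq qs F ((proj a S)(X := P (replicate (snd X) a)))"
      then obtain P where "sq qs F ((proj a S)(X := P (replicate (snd X) a)))" by blast
      then show "\<exists>c. sq qs F ((proj a S)(X := c))" by (rule exI)
    next
      assume "\<exists>c. sq qs F ((proj a S)(X := c))"
      then obtain c where c: "sq qs F ((proj a S)(X := c))" by blast
      obtain P where P: "rel_on {a} (snd X) P" "P (replicate (snd X) a) = c" using ex by blast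
      show "\<exists>P. rel_on {a} (snd X) P \<and> sq qs F ((proj a S)(X := P (replicate (snd X) a)))"
        using P c by (intro exI[of _ P]) simp
    qed
    also have "\<dots> = sq (q#qs) F (proj a S)" unfolding q by (simp only: True sq.simps)
    finally show ?thesis .
  next
    case False
    have "q_sat {a} (q#qs) (\<lambda>S. F (proj a S)) S = (\<forall>P. rel_on {a} (snd X) P \<longrightarrow> sq qs F ((proj a S)(X := P (replicate (snd X) a))))"
      unfolding q using False by (simp only: q_sat.simps Cons.IH proj_upd simp_thms)
    also have "\<dots> = (\<forall>c. sq qs F ((proj a S)(X := c)))"
    proof
      assume H: "\<forall>P. rel_on {a} (snd X) P \<longrightarrow> sq qs F ((proj a S)(X := P (replicate (snd X) a)))"
      show "\<forall>c. sq qs F ((proj a S)(X := c))"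
      proof
        fix c
        obtain P where P: "rel_on {a} (snd X) P" "P (replicate (snd X) a) = c" using ex by blast
        then show "sq qs F ((proj a S)(X := c))" using H[rule_format, OF P(1)] by simp
      qed
    next
      assume "\<forall>c. sq qs F ((proj a S)(X := c))"
      then show "\<forall>P. rel_on {a} (snd X) P \<longrightarrow> sq qs F ((proj a S)(X := P (replicate (snd X) a)))" by blast
    qed
    also have "\<dots> = sq (q#qs) F (proj a S)" unfolding q using False by (simp only: sq.simps simp_thms)
    finally show ?thesis .
  qed
qed

lemma so_models_single:
  assumes "wf_fo \<tau> V p"
  shows "so_models {a} I (SO qs p) = sq qs (\<lambda>B. sval (\<lambda>R. I R (replicate (snd R) a)) B p) (\<lambda>_. False)"
proof -
  have "so_models {a} I (SO qs p) = q_sat {a} qs (\<lambda>S. fo_sat {a} I S (\<lambda>_. SOME x. x \<in> {a}) p) (\<lambda>_ _. False)"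
    by (simp add: so_models_def)
  also have "\<dots> = q_sat {a} qs (\<lambda>S. sval (\<lambda>R. I R (replicate (snd R) a)) (proj a S) p) (\<lambda>_ _. False)"
    by (intro q_sat_cong) (simp add: fo_sat_single[OF assms] proj_def)
  also have "\<dots> = sq qs (\<lambda>B. sval (\<lambda>R. I R (replicate (snd R) a)) B p) (proj a (\<lambda>_ _. False))"
    by (rule q_sat_single)
  also have "proj a (\<lambda>_ _. False) = (\<lambda>_. False)" by (simp add: proj_def)
  finally show ?thesis .
qed

definition sigma_of :: "rsym list \<Rightarrow> bool list \<Rightarrow> rsym \<Rightarrow> bool" where
  "sigma_of L bs R = (\<exists>j<length L. L!j = R \<and> bs!j)"

definition Good :: "(bool \<times> svar) list \<Rightarrow> fo \<Rightarrow> rsym list \<Rightarrow> bool list \<Rightarrow> bool" where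
  "Good qs p L bs = sq qs (\<lambda>B. sval (sigma_of L bs) B p) (\<lambda>_. False)"

definition scl :: "rsym list \<Rightarrow> svar \<Rightarrow> bool list \<Rightarrow> clause" where
  "scl L D bs = (map (\<lambda>j. LRel (\<not> bs!j) (L!j) (replicate (snd (L!j)) 0)) [0..<length L], HNonempty D, HBot)"

definition sclauses :: "(bool \<times> svar) list \<Rightarrow> fo \<Rightarrow> svar \<Rightarrow> clause list" where
  "sclauses qs p D = map (scl (rels p) D) (filter (\<lambda>bs. \<not> Good qs p (rels p) bs) (List.n_lists (length (rels p)) [True, False]))"

definition dcl :: "svar \<Rightarrow> clause" where
  "dcl D = ([LEq False 0 1], HNeg D [0,1], HBot)"

lemma sigma_of_bits: "R \<in> set L \<Longrightarrow> sigma_of L (map \<sigma> L) R = \<sigma> R"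
  unfolding sigma_of_def by (auto simp: in_set_conv_nth)

lemma Good_bits:
  assumes "wf_fo \<tau> V p"
  shows "Good qs p (rels p) (map (\<lambda>R. I R (replicate (snd R) a)) (rels p)) = so_models {a} I (SO qs p)"
proof -
  let ?\<sigma> = "\<lambda>R. I R (replicate (snd R) a)"
  have "(\<lambda>B. sval (sigma_of (rels p) (map ?\<sigma> (rels p))) B p) = (\<lambda>B. sval ?\<sigma> B p)"
    using sigma_of_bits[of _ "rels p" ?\<sigma>] by (intro ext sval_cong) auto
  then show ?thesis unfolding Good_def so_models_single[OF assms] by simp
qed

lemma scl_sat:
  assumes "w 0 = a" "length bs = length L" "\<not> hlit_sat A S w (HNonempty D)"
  shows "clause_sat A I S w (scl L D bs) \<longleftrightarrow> map (\<lambda>R. I R (replicate (snd R) a)) L \<noteq> bs"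
proof -
  have l: "lit_sat I w (LRel (\<not> c) R (replicate n 0)) \<longleftrightarrow> I R (replicate n a) \<noteq> c" for c R n
    using assms(1) by (cases c) auto
  have "clause_sat A I S w (scl L D bs) \<longleftrightarrow> (\<exists>j\<in>set [0..<length L]. lit_sat I w (LRel (\<not> bs!j) (L!j) (replicate (snd (L!j)) 0)))"
    using assms(3) unfolding clause_sat_def scl_def by (simp only: prod.case set_map image_iff bex_simps hlit_sat.simps simp_thms)
  also have "\<dots> \<longleftrightarrow> (\<exists>j<length L. I (L!j) (replicate (snd (L!j)) a) \<noteq> bs!j)"
    unfolding l by auto
  also have "\<dots> \<longleftrightarrow> map (\<lambda>R. I R (replicate (snd R) a)) L \<noteq> bs"
    using assms(2) by (auto simp: list_eq_iff_nth_eq)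
  finally show ?thesis .
qed



lemma tr_wf: "wf_fo \<tau> V p \<Longrightarrow> vb p \<le> N \<Longrightarrow> c \<in> set (snd (tr N n pol p)) \<Longrightarrow> it \<in> set c \<Longrightarrow>
  (case it of ITau l \<Rightarrow> wf_lit \<tau> (set [0..<N+4]) l | ISO b X xs \<Rightarrow> length xs = snd X)"
proof (induction p arbitrary: n pol c)
  case (FRel R xs) then show ?case using mem_sum_list[of _ xs] by fastforce
next
  case (FAnd p q) then show ?case by (auto simp: Let_def split: if_splits)
next
  case (FOr p q) then show ?case by (auto simp: Let_def split: if_splits)
next
  case (FEx y p) then show ?case by (auto simp: Let_def split: if_splits)
next
  case (FAll y p) then show ?case by (auto simp: Let_def split: if_splits)
qed auto

lemma wdom_iff: "wdom A xs w \<longleftrightarrow> (\<forall>x. x \<notin> set xs \<longrightarrow> w x = (SOME a. a \<in> A)) \<and> (\<forall>x\<in>set xs. w x \<in> A)"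
  by (simp add: wdom_def)

lemma dcl_sat: "clause_sat A I S w (dcl D) \<longleftrightarrow> w 0 \<noteq> w 1 \<or> \<not> S D [w 0, w 1]"
  by (simp add: clause_sat_def dcl_def)

lemma rest_big:
  fixes A :: "'a set" and S :: "svar \<Rightarrow> 'a list \<Rightarrow> bool"
  assumes vb: "vb p \<le> N" and fv: "fv p = {}" and names: "\<forall>X\<in>svs p. fst X < M"
   and ab: "a \<in> A" "b \<in> A" "a \<noteq> b"
   and m_def: "m = fst (tr N M True p)"
   and chks_def: "chks = [ISO True (M,N) [0..<N]] # snd (tr N M True p)"
   and Dv_def: "Dv = (m + length chks, 2)"
   and Vs_def: "Vs = map (\<lambda>j. (j,N)) [M..<m]"
   and Gs_def: "Gs = map (gv N m) [0..<length chks]"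
   and scs: "\<forall>c\<in>set scs. \<exists>bs. c = scl Ls Dv bs"
  shows "q_sat A (map (Pair False) Vs @ map (Pair True) (Gs @ [Dv]))
           (\<lambda>S. \<forall>w. wdom A [0..<N+4] w \<longrightarrow> (\<forall>c\<in>set (mux N m chks @ dcl Dv # scs). clause_sat A I S w c)) S
         = fo_sat A I S (\<lambda>_. SOME a. a\<in>A) p"
proof -
  define body where "body = (\<lambda>S. \<forall>w. wdom A [0..<N+4] w \<longrightarrow> (\<forall>c\<in>set (mux N m chks @ dcl Dv # scs). clause_sat A I S w c))"
  define L where "L = length chks"
  define GD where "GD = Gs @ [Dv]"
  have Mm: "M < m" using tr_mono m_def by auto
  have L0: "0 < L" unfolding L_def chks_def by simp
  have dVs: "distinct Vs" unfolding Vs_def by (simp add: distinct_map inj_on_def)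
  have setVs: "X \<in> set Vs \<longleftrightarrow> inR N M m X" for X unfolding Vs_def by (cases X) auto
  have setGs: "X \<in> set Gs \<longleftrightarrow> (\<exists>i<L. X = gv N m i)" for X unfolding Gs_def L_def by auto
  have DvGs: "Dv \<notin> set Gs" unfolding setGs Dv_def gv_def L_def by auto
  have dGD: "distinct GD" unfolding GD_def Gs_def using DvGs[unfolded Gs_def]
    by (simp add: distinct_map inj_on_def gv_def)
  have setGD: "X \<in> set GD \<longleftrightarrow> (\<exists>i<L. X = gv N m i) \<or> X = Dv" for X using setGs[of X] unfolding GD_def by auto
  have isv_chks: "fst X < m" if "i < L" "it \<in> set (chks!i)" "X \<in> isv it" for i it X
  proof (cases i)
    case 0 then show ?thesis using that Mm unfolding chks_def by auto
  next
    case (Suc i')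
    then have "chks ! i \<in> set (snd (tr N M True p))" using that(1) unfolding chks_def L_def by simp
    then have "X \<in> svs p \<or> inR N M m X" using tr_isv that(2,3) m_def by blast
    then show ?thesis using names Mm by fastforce
  qed
  have iv_chks: "\<forall>i<L. \<forall>it\<in>set(chks!i). \<forall>x\<in>ivars it. x \<le> N \<or> x = N+3"
  proof (intro allI impI ballI)
    fix i it x assume i: "i < L" and it: "it \<in> set (chks!i)" and x: "x \<in> ivars it"
    show "x \<le> N \<or> x = N+3"
    proof (cases i)
      case 0 then show ?thesis using it x unfolding chks_def by auto
    next
      case (Suc i')
      then have "chks ! i \<in> set (snd (tr N M True p))" using i unfolding chks_def L_def by simp
      then show ?thesis using tr_ivars[OF vb] it x by blast
    qed
  qed
  have nGD: "X \<notin> set GD" if "fst X < m" for X using that unfolding setGD Dv_def gv_def by auto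
  have chk_cong: "check_holds A I S' N (chks!i) = check_holds A I S'' N (chks!i)"
    if "i < L" "\<forall>X. fst X < m \<longrightarrow> S' X = S'' X" for i S' S''
    using that isv_chks by (intro check_holds_cong) blast
  have v0: "fo_sat A I S w p = fo_sat A I S (\<lambda>_. SOME a. a\<in>A) p" for w :: "nat \<Rightarrow> 'a"
    using fv by (intro fo_sat_cong_fv) simp
  have qs: "q_sat A (map (Pair False) Vs @ map (Pair True) GD) body S =
     (\<forall>S1. (\<forall>X. X \<notin> set Vs \<longrightarrow> S1 X = S X) \<longrightarrow> (\<forall>X\<in>set Vs. rel_on A (snd X) (S1 X)) \<longrightarrow>
       (\<exists>S2. (\<forall>X. X \<notin> set GD \<longrightarrow> S2 X = S1 X) \<and> (\<forall>X\<in>set GD. rel_on A (snd X) (S2 X)) \<and> body S2))"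
    unfolding q_sat_append q_sat_all[OF dVs] q_sat_ex[OF dGD] by simp
  have "q_sat A (map (Pair False) Vs @ map (Pair True) GD) body S = fo_sat A I S (\<lambda>_. SOME a. a\<in>A) p"
    unfolding qs
  proof (intro iffI allI impI)
    assume H: "\<forall>S1. (\<forall>X. X \<notin> set Vs \<longrightarrow> S1 X = S X) \<longrightarrow> (\<forall>X\<in>set Vs. rel_on A (snd X) (S1 X)) \<longrightarrow>
       (\<exists>S2. (\<forall>X. X \<notin> set GD \<longrightarrow> S2 X = S1 X) \<and> (\<forall>X\<in>set GD. rel_on A (snd X) (S2 X)) \<and> body S2)"
    show "fo_sat A I S (\<lambda>_. SOME a. a\<in>A) p"
    proof (rule ccontr)
      assume nf: "\<not> fo_sat A I S (\<lambda>_. SOME a. a\<in>A) p"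
      have names': "\<forall>X\<in>svs p. fst X < M" using names .
      obtain S1 where S1: "\<forall>X. \<not> inR N M m X \<longrightarrow> S1 X = S X"
        "\<forall>j. M \<le> j \<and> j < m \<longrightarrow> rel_on A N (S1 (j,N))"
        "\<forall>w. (\<forall>i. w i \<in> A) \<longrightarrow> S1 (M,N) (map w [0..<N]) = (fo_sat A I S w p = True)"
        "\<forall>c\<in>set (snd (tr N M True p)). \<not> check_holds A I S1 N c"
        using tr_complete[OF vb names', of True S A I] unfolding m_def[symmetric] by blast
      have "\<forall>X. X \<notin> set Vs \<longrightarrow> S1 X = S X" using S1(1) setVs by blast
      moreover have "\<forall>X\<in>set Vs. rel_on A (snd X) (S1 X)" using S1(2) unfolding Vs_def by auto
      ultimately obtain S2 where S2: "\<forall>X. X \<notin> set GD \<longrightarrow> S2 X = S1 X" "body S2" using H by blast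
      have "\<forall>w. wdom A [0..<N+4] w \<longrightarrow> (\<forall>c\<in>set (mux N m chks). clause_sat A I S2 w c)"
        using S2(2) unfolding body_def by auto
      then obtain j where j: "j < L" "check_holds A I S2 N (chks!j)"
        using mux_sound[OF ab, of chks] L0 unfolding L_def by blast
      have "check_holds A I S1 N (chks!j)"
        using j chk_cong[OF j(1), of S2 S1] S2(1) nGD by auto
      then show False
      proof (cases j)
        case 0
        then obtain w where w: "\<forall>i. w i \<in> A" "\<forall>z\<in>A. item_sat I S1 (w(N+3:=z)) (ISO True (M,N) [0..<N])"
          using \<open>check_holds A I S1 N (chks!j)\<close> unfolding check_holds_def chks_def by auto
        have "S1 (M,N) (map w [0..<N])" using w(2) ab(1) by (auto simp: xv_upd3)
        then have "fo_sat A I S w p" using S1(3) w(1) by simp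
        then show False using nf v0 by simp
      next
        case (Suc j')
        then have "chks ! j \<in> set (snd (tr N M True p))" using j(1) unfolding chks_def L_def by simp
        then show False using S1(4) \<open>check_holds A I S1 N (chks!j)\<close> by blast
      qed
    qed
  next
    fix S1 assume f: "fo_sat A I S (\<lambda>_. SOME a. a\<in>A) p" and S1: "\<forall>X. X \<notin> set Vs \<longrightarrow> S1 X = S X"
      and S1r: "\<forall>X\<in>set Vs. rel_on A (snd X) (S1 X)"
    have hold: "\<exists>j<L. check_holds A I S1 N (chks!j)"
    proof (cases "\<exists>c\<in>set (snd (tr N M True p)). check_holds A I S1 N c")
      case True
      then obtain j where "j < length (snd (tr N M True p))" "check_holds A I S1 N (snd (tr N M True p) ! j)"
        by (auto simp: in_set_conv_nth)
      then show ?thesis unfolding L_def chks_def by (intro exI[of _ "Suc j"]) simp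
    next
      case False
      define w :: "nat \<Rightarrow> 'a" where "w = (\<lambda>_. a)"
      have wA: "\<forall>i. w i \<in> A" using ab unfolding w_def by simp
      have "fo_sat A I S1 w p = fo_sat A I S w p"
      proof (intro fo_sat_cong_S ballI)
        fix X assume "X \<in> svs p"
        then have "fst X < M" using names by blast
        then have "X \<notin> set Vs" using setVs[of X] by simp
        then show "S1 X = S X" using S1 by blast
      qed
      then have "fo_sat A I S1 w p = True" using f v0 by simp
      then have "S1 (M,N) (map w [0..<N])" using tr_sound[OF vb _ wA] False by blast
      then have "check_holds A I S1 N (chks!0)" unfolding check_holds_def chks_def using wA
        by (auto simp: xv_upd3)
      then show ?thesis using L0 by blast
    qed
    then obtain j where j: "j < L" "check_holds A I S1 N (chks!j)" by blast
    define S1' where "S1' = S1(Dv := (\<lambda>ts. ts = [a,b]))"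
    have "check_holds A I S1' N (chks!j)"
      using j chk_cong[OF j(1), of S1' S1] unfolding S1'_def Dv_def by auto
    then obtain S' where S': "\<forall>X. (\<forall>i<length chks. X \<noteq> gv N m i) \<longrightarrow> S' X = S1' X"
       "\<forall>i<length chks. rel_on A (N+3) (S' (gv N m i))"
       "\<forall>w. wdom A [0..<N+4] w \<longrightarrow> (\<forall>c\<in>set (mux N m chks). clause_sat A I S' w c)"
      using mux_complete[OF ab, of j chks I S1' N m] j isv_chks iv_chks unfolding L_def by blast
    have "\<forall>i<length chks. Dv \<noteq> gv N m i" using DvGs setGs unfolding L_def by blast
    then have "S' Dv = S1' Dv" using S'(1) by blast
    then have SDv: "S' Dv = (\<lambda>ts. ts = [a,b])" by (simp add: S1'_def)
    show "\<exists>S2. (\<forall>X. X \<notin> set GD \<longrightarrow> S2 X = S1 X) \<and> (\<forall>X\<in>set GD. rel_on A (snd X) (S2 X)) \<and> body S2"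
    proof (intro exI[of _ S'] conjI allI impI ballI)
      fix X assume "X \<notin> set GD"
      then have "\<forall>i<length chks. X \<noteq> gv N m i" "X \<noteq> Dv" using setGD[of X] unfolding L_def by auto
      then have "S' X = S1' X" using S'(1) by blast
      then show "S' X = S1 X" using \<open>X \<noteq> Dv\<close> by (simp add: S1'_def)
    next
      fix X assume "X \<in> set GD"
      then show "rel_on A (snd X) (S' X)" unfolding setGD
        using S'(2) SDv ab unfolding L_def gv_def Dv_def rel_on_def by auto
    next
      show "body S'" unfolding body_def
      proof (intro allI impI ballI)
        fix w c assume wd: "wdom A [0..<N+4] w" and c: "c \<in> set (mux N m chks @ dcl Dv # scs)"
        then consider "c \<in> set (mux N m chks)" | "c = dcl Dv" | "c \<in> set scs" by auto
        then show "clause_sat A I S' w c"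
        proof cases
          case 1 then show ?thesis using S'(3) wd by blast
        next
          case 2 then show ?thesis using dcl_sat[of A I S' w Dv] SDv ab by auto
        next
          case 3
          then obtain bs where "c = scl Ls Dv bs" using scs by blast
          then show ?thesis using SDv ab unfolding clause_sat_def scl_def Dv_def by auto
        qed
      qed
    qed
  qed
  then show ?thesis unfolding body_def GD_def .
qed



lemma two_single: "length ts = 2 \<Longrightarrow> set ts \<subseteq> {a} \<Longrightarrow> ts = [a,a]"
proof -
  assume "length ts = 2" "set ts \<subseteq> {a}"
  then have "ts = replicate 2 a" by (intro replicate_eqI) auto
  then show ?thesis by (simp add: numeral_2_eq_2)
qed

lemma rest_single:
  fixes S :: "svar \<Rightarrow> 'a list \<Rightarrow> bool"
  assumes m_def: "m = fst (tr N M True p)"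
   and chks_def: "chks = [ISO True (M,N) [0..<N]] # snd (tr N M True p)"
   and Dv_def: "Dv = (m + length chks, 2)"
   and Vs_def: "Vs = map (\<lambda>j. (j,N)) [M..<m]"
   and Gs_def: "Gs = map (gv N m) [0..<length chks]"
   and scs_def: "scs = map (scl Ls Dv) (filter (\<lambda>bs. \<not> Good qs p Ls bs) (List.n_lists (length Ls) [True,False]))"
  shows "q_sat {a} (map (Pair False) Vs @ map (Pair True) (Gs @ [Dv]))
           (\<lambda>S. \<forall>w. wdom {a} [0..<N+4] w \<longrightarrow> (\<forall>c\<in>set (mux N m chks @ dcl Dv # scs). clause_sat {a} I S w c)) S
         = Good qs p Ls (map (\<lambda>R. I R (replicate (snd R) a)) Ls)"
proof -
  define body where "body = (\<lambda>S. \<forall>w. wdom {a} [0..<N+4] w \<longrightarrow> (\<forall>c\<in>set (mux N m chks @ dcl Dv # scs). clause_sat {a} I S w c))"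
  define L where "L = length chks"
  define GD where "GD = Gs @ [Dv]"
  define bits where "bits = map (\<lambda>R. I R (replicate (snd R) a)) Ls"
  have dVs: "distinct Vs" unfolding Vs_def by (simp add: distinct_map inj_on_def)
  have setGs: "X \<in> set Gs \<longleftrightarrow> (\<exists>i<L. X = gv N m i)" for X unfolding Gs_def L_def by auto
  have DvGs: "Dv \<notin> set Gs" unfolding setGs Dv_def gv_def L_def by auto
  have dGD: "distinct GD" unfolding GD_def Gs_def using DvGs[unfolded Gs_def]
    by (simp add: distinct_map inj_on_def gv_def)
  have wa: "w x = a" if "wdom {a} [0..<N+4] w" for w x
    using that unfolding wdom_def by (cases "x \<in> set [0..<N+4]") auto
  have wd: "wdom {a} [0..<N+4] (\<lambda>_. a)" unfolding wdom_def by simp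
  have qs: "q_sat {a} (map (Pair False) Vs @ map (Pair True) GD) body S =
     (\<forall>S1. (\<forall>X. X \<notin> set Vs \<longrightarrow> S1 X = S X) \<longrightarrow> (\<forall>X\<in>set Vs. rel_on {a} (snd X) (S1 X)) \<longrightarrow>
       (\<exists>S2. (\<forall>X. X \<notin> set GD \<longrightarrow> S2 X = S1 X) \<and> (\<forall>X\<in>set GD. rel_on {a} (snd X) (S2 X)) \<and> body S2))"
    unfolding q_sat_append q_sat_all[OF dVs] q_sat_ex[OF dGD] by simp
  have "q_sat {a} (map (Pair False) Vs @ map (Pair True) GD) body S = Good qs p Ls bits"
    unfolding qs
  proof (intro iffI allI impI)
    assume H: "\<forall>S1. (\<forall>X. X \<notin> set Vs \<longrightarrow> S1 X = S X) \<longrightarrow> (\<forall>X\<in>set Vs. rel_on {a} (snd X) (S1 X)) \<longrightarrow>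
       (\<exists>S2. (\<forall>X. X \<notin> set GD \<longrightarrow> S2 X = S1 X) \<and> (\<forall>X\<in>set GD. rel_on {a} (snd X) (S2 X)) \<and> body S2)"
    define S1 where "S1 = (\<lambda>X. if X \<in> set Vs then (\<lambda>_. False) else S X)"
    have "\<forall>X. X \<notin> set Vs \<longrightarrow> S1 X = S X" "\<forall>X\<in>set Vs. rel_on {a} (snd X) (S1 X)"
      unfolding S1_def by (auto simp: rel_on_def)
    then obtain S2 where S2: "\<forall>X\<in>set GD. rel_on {a} (snd X) (S2 X)" "body S2" using H by blast
    have "dcl Dv \<in> set (mux N m chks @ dcl Dv # scs)" by simp
    then have "clause_sat {a} I S2 (\<lambda>_. a) (dcl Dv)" using S2(2) wd unfolding body_def by blast
    then have nd: "\<not> S2 Dv [a,a]" unfolding dcl_sat by simp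
    have "rel_on {a} 2 (S2 Dv)" using S2(1) unfolding GD_def Dv_def by auto
    then have "\<not> hlit_sat {a} S2 (\<lambda>_. a) (HNonempty Dv)"
      using nd two_single unfolding rel_on_def Dv_def by fastforce
    show "Good qs p Ls bits"
    proof (rule ccontr)
      assume ng: "\<not> Good qs p Ls bits"
      have "bits \<in> set (List.n_lists (length Ls) [True,False])" unfolding set_n_lists bits_def by auto
      then have "scl Ls Dv bits \<in> set scs" using ng unfolding scs_def by auto
      then have "clause_sat {a} I S2 (\<lambda>_. a) (scl Ls Dv bits)" using S2(2) wd unfolding body_def by auto
      then show False using scl_sat[of "\<lambda>_. a" a bits Ls "{a}" S2 Dv I] \<open>\<not> hlit_sat {a} S2 (\<lambda>_. a) (HNonempty Dv)\<close>
        unfolding bits_def by simp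
    qed
  next
    fix S1 assume G: "Good qs p Ls bits"
    define S2 :: "svar \<Rightarrow> 'a list \<Rightarrow> bool" where "S2 = (\<lambda>X. if X \<in> set GD then (\<lambda>_. False) else S1 X)"
    have S2G: "S2 X = (\<lambda>_. False)" if "X \<in> set GD" for X using that unfolding S2_def by simp
    have GsGD: "gv N m i \<in> set GD" if "i < L" for i using that setGs unfolding GD_def by auto
    have DvGD: "Dv \<in> set GD" unfolding GD_def by simp
    show "\<exists>S2. (\<forall>X. X \<notin> set GD \<longrightarrow> S2 X = S1 X) \<and> (\<forall>X\<in>set GD. rel_on {a} (snd X) (S2 X)) \<and> body S2"
    proof (intro exI[of _ S2] conjI allI impI ballI)
      fix X assume "X \<notin> set GD" then show "S2 X = S1 X" unfolding S2_def by simp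
    next
      fix X assume "X \<in> set GD" then show "rel_on {a} (snd X) (S2 X)" using S2G by (simp add: rel_on_def)
    next
      show "body S2" unfolding body_def
      proof (intro allI impI ballI)
        fix w c assume w: "wdom {a} [0..<N+4] w" and c: "c \<in> set (mux N m chks @ dcl Dv # scs)"
        have wx: "w x = a" for x using wa[OF w] .
        from c consider "c \<in> set (mux N m chks)" | "c = dcl Dv" | "c \<in> set scs" by auto
        then show "clause_sat {a} I S2 w c"
        proof cases
          case 1
          then consider "c = top_cl N m" | i it where "i < L" "it \<in> set (chks!i)" "c = item_cl N m i it"
            | i where "i < L" "c = chain_cl N m L i" unfolding mux_mem L_def by blast
          then show ?thesis
          proof cases
            case 1 then show ?thesis using top_cl_sat[of "{a}" I S2 w N m] wx by simp
          next
            case (2 i it) then show ?thesis using item_cl_sat[of "{a}" I S2 w N m i it] S2G[OF GsGD] by simp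
          next
            case (3 i) then show ?thesis using chain_cl_sat[of "{a}" I S2 w N m L i] S2G[OF GsGD] by simp
          qed
        next
          case 2 then show ?thesis using dcl_sat[of "{a}" I S2 w Dv] S2G[OF DvGD] by simp
        next
          case 3
          then obtain bs where bs: "bs \<in> set (List.n_lists (length Ls) [True,False])" "\<not> Good qs p Ls bs" "c = scl Ls Dv bs"
            unfolding scs_def by auto
          have lb: "length bs = length Ls" using bs(1) by (simp add: length_n_lists_elem)
          have nh: "\<not> hlit_sat {a} S2 w (HNonempty Dv)" using S2G[OF DvGD] by simp
          have "bits \<noteq> bs" using G bs(2) by auto
          then show ?thesis using scl_sat[OF wx lb nh] bs(3) unfolding bits_def by simp
        qed
      qed
    qed
  qed
  then show ?thesis unfolding body_def GD_def bits_def .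
qed



definition M0 :: "(bool \<times> svar) list \<Rightarrow> nat" where
  "M0 qs = Suc (sum_list (map (\<lambda>q. fst (snd q)) qs))"

definition build :: "soform \<Rightarrow> krom" where
  "build f = (case f of SO qs p \<Rightarrow> (let N = vb p; M = M0 qs + length qs; m = fst (tr N M True p);
     chks = [ISO True (M,N) [0..<N]] # snd (tr N M True p); Dv = (m + length chks, 2);
     Vs = map (\<lambda>j. (j,N)) [M..<m]; Gs = map (gv N m) [0..<length chks] in
     KROM (dd (M0 qs) qs @ map (Pair False) Vs @ map (Pair True) (Gs @ [Dv])) [0..<N+4]
        (mux N m chks @ dcl Dv # sclauses qs p Dv)))"

lemma M0_bound: "X \<in> snd ` set qs \<Longrightarrow> fst X < M0 qs"
proof -
  assume "X \<in> snd ` set qs"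
  then have "fst X \<in> set (map (\<lambda>q. fst (snd q)) qs)" by auto
  then show ?thesis unfolding M0_def by (rule mem_sum_list)
qed

lemma build_equiv:
  assumes f: "SO qs p \<in> SO_class b k \<tau>"
  shows "equivalent \<tau> (SO qs p) (build (SO qs p))"
  unfolding equivalent_def
proof (intro allI impI)
  fix A :: "nat set" and I assume st: "is_structure \<tau> A I"
  have wf: "wf_fo \<tau> (snd ` set qs) p" and fv: "fv p = {}" using f unfolding SO_class_def by auto
  define N where "N = vb p"
  define M where "M = M0 qs + length qs"
  define m where "m = fst (tr N M True p)"
  define chks where "chks = [ISO True (M,N) [0..<N]] # snd (tr N M True p)"
  define Dv :: svar where "Dv = (m + length chks, 2)"
  define Vs where "Vs = map (\<lambda>j. (j,N)) [M..<m]"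
  define Gs where "Gs = map (gv N m) [0..<length chks]"
  define body where "body = (\<lambda>S. \<forall>w. wdom A [0..<N+4] w \<longrightarrow> (\<forall>c\<in>set (mux N m chks @ dcl Dv # sclauses qs p Dv). clause_sat A I S w c))"
  define rest where "rest = map (Pair False) Vs @ map (Pair True) (Gs @ [Dv])"
  have svsM0: "\<forall>X\<in>svs p. fst X < M0 qs" using wf_svs[OF wf] M0_bound by blast
  have svsM: "\<forall>X\<in>svs p. fst X < M" using svsM0 unfolding M_def by fastforce
  have bd: "build (SO qs p) = KROM (dd (M0 qs) qs @ rest) [0..<N+4] (mux N m chks @ dcl Dv # sclauses qs p Dv)"
    unfolding build_def rest_def N_def M_def m_def chks_def Dv_def Vs_def Gs_def by (simp add: Let_def)
  have km: "krom_models A I (build (SO qs p)) = q_sat A (dd (M0 qs) qs) (q_sat A rest body) (\<lambda>_ _. False)"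
    unfolding bd krom_models_def krom.case body_def wdom_def q_sat_append by (rule refl)
  have fin: "A \<noteq> {}" using st unfolding is_structure_def by simp
  show "so_models A I (SO qs p) = krom_models A I (build (SO qs p))"
  proof (cases "\<exists>a\<in>A. \<exists>b\<in>A. a \<noteq> b")
    case True
    then obtain a b' where ab: "a \<in> A" "b' \<in> A" "a \<noteq> b'" by blast
    have r: "q_sat A rest body S = fo_sat A I S (\<lambda>_. SOME a. a\<in>A) p" for S
      unfolding rest_def body_def sclauses_def
      by (rule rest_big[OF _ fv svsM ab m_def chks_def Dv_def Vs_def Gs_def]) (auto simp: N_def)
    have "krom_models A I (build (SO qs p)) = q_sat A (dd (M0 qs) qs) (\<lambda>S. fo_sat A I S (\<lambda>_. SOME a. a\<in>A) p) (\<lambda>_ _. False)"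
      unfolding km by (intro q_sat_cong r)
    also have "\<dots> = q_sat A qs (\<lambda>S. fo_sat A I S (\<lambda>_. SOME a. a\<in>A) p) (\<lambda>_ _. False)"
    proof (rule dd_qsat[symmetric, of "svs p"])
      show "\<forall>X\<in>svs p. fst X < M0 qs" by (rule svsM0)
      show "\<forall>S S'. (\<forall>X\<in>svs p. S X = S' X) \<longrightarrow> fo_sat A I S (\<lambda>_. SOME a. a\<in>A) p = fo_sat A I S' (\<lambda>_. SOME a. a\<in>A) p"
        using fo_sat_cong_S by blast
    qed simp
    finally show ?thesis unfolding so_models_def by simp
  next
    case False
    then obtain a where A: "A = {a}" using fin by blast
    have r: "q_sat A rest body S = Good qs p (rels p) (map (\<lambda>R. I R (replicate (snd R) a)) (rels p))" for S
      unfolding rest_def body_def A sclauses_def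
      by (rule rest_single[OF m_def chks_def Dv_def Vs_def Gs_def]) simp
    have "krom_models A I (build (SO qs p)) = Good qs p (rels p) (map (\<lambda>R. I R (replicate (snd R) a)) (rels p))"
      unfolding km r q_sat_const ..
    also have "\<dots> = so_models A I (SO qs p)" unfolding A by (rule Good_bits[OF wf])
    finally show ?thesis by simp
  qed
qed



lemma map_fst_Pair: "map fst (map (Pair c) xs) = replicate (length xs) c"
  by (induction xs) auto

lemma map_fst_comp: "map (fst \<circ> Pair c) xs = replicate (length xs) c"
  by (induction xs) auto

lemma map_snd_comp: "map (snd \<circ> Pair c) xs = xs"
  by (induction xs) auto

lemma map_snd_Pair: "map snd (map (Pair c) xs) = xs"
  by (induction xs) auto

lemma wf_clause_simp: "wf_clause \<tau> V W (bs, h1, h2) \<longleftrightarrow> (\<forall>b\<in>set bs. wf_lit \<tau> W b) \<and> wf_hlit V W h1 \<and> wf_hlit V W h2"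
  by (simp add: wf_clause_def)

lemma build_class:
  assumes f: "SO qs p \<in> SO_class b k \<tau>" and lst: "last (map fst qs) = False"
  shows "build (SO qs p) \<in> KROM_class b (k + 1) \<tau>"
proof -
  have wf: "wf_fo \<tau> (snd ` set qs) p" and pc: "prefix_class b k qs" using f unfolding SO_class_def by auto
  define N where "N = vb p"
  define M where "M = M0 qs + length qs"
  define m where "m = fst (tr N M True p)"
  define chks where "chks = [ISO True (M,N) [0..<N]] # snd (tr N M True p)"
  define Dv :: svar where "Dv = (m + length chks, 2)"
  define Vs where "Vs = map (\<lambda>j. (j,N)) [M..<m]"
  define Gs where "Gs = map (gv N m) [0..<length chks]"
  define rest where "rest = map (Pair False) Vs @ map (Pair True) (Gs @ [Dv])"
  define pre where "pre = dd (M0 qs) qs @ rest"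
  define W where "W = set [0..<N+4]"
  define L where "L = length chks"
  have bd: "build (SO qs p) = KROM pre [0..<N+4] (mux N m chks @ dcl Dv # sclauses qs p Dv)"
    unfolding build_def pre_def rest_def N_def M_def m_def chks_def Dv_def Vs_def Gs_def by (simp add: Let_def)
  have Mm: "M < m" using tr_mono m_def by auto
  have L0: "0 < L" unfolding L_def chks_def by simp
  have qne: "qs \<noteq> []" and hdq: "fst (hd qs) = b" and nbq: "nblocks qs = k" using pc unfolding prefix_class_def by auto
  have mf: "map fst pre = map fst qs @ replicate (length Vs) False @ replicate (length Gs + 1) True"
    unfolding pre_def rest_def by (simp add: dd_fst map_fst_Pair map_fst_comp replicate_append_same)
  have lV: "length Vs > 0" unfolding Vs_def using Mm by simp
  have "remdups_adj (map fst pre) = remdups_adj (map fst qs) @ [True]"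
    unfolding mf using qne lst lV by (intro remdups_adj_ext) auto
  then have nb: "nblocks pre = k + 1" using nbq unfolding nblocks_def by simp
  have pne: "pre \<noteq> []" using qne unfolding pre_def by (cases qs) auto
  have "hd (map fst pre) = hd (map fst qs)" unfolding mf using qne by (cases qs) auto
  then have "fst (hd pre) = b" using hdq qne pne by (simp add: hd_map)
  then have pcl: "prefix_class b (k+1) pre" using nb pne unfolding prefix_class_def by simp
  have namesq: "\<forall>Y\<in>snd ` set qs. fst Y < M0 qs" using M0_bound by blast
  have d1: "distinct (map snd (dd (M0 qs) qs))" by (rule dd_distinct[OF namesq])
  have n1: "fst Y < M" if "Y \<in> set (map snd (dd (M0 qs) qs))" for Y
    using dd_names[OF namesq, of Y] that unfolding M_def by auto
  have dVs: "distinct Vs" unfolding Vs_def by (simp add: distinct_map inj_on_def)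
  have setVs: "X \<in> set Vs \<longleftrightarrow> inR N M m X" for X unfolding Vs_def by (cases X) auto
  have setGs: "X \<in> set Gs \<longleftrightarrow> (\<exists>i<L. X = gv N m i)" for X unfolding Gs_def L_def by auto
  have DvGs: "Dv \<notin> set Gs" unfolding setGs Dv_def gv_def L_def by auto
  have dGD: "distinct (Gs @ [Dv])" unfolding Gs_def using DvGs[unfolded Gs_def]
    by (simp add: distinct_map inj_on_def gv_def)
  have msp: "map snd pre = map snd (dd (M0 qs) qs) @ Vs @ Gs @ [Dv]"
    unfolding pre_def rest_def by (simp add: map_snd_Pair map_snd_comp)
  have GDn: "m \<le> fst X" if "X \<in> set (Gs @ [Dv])" for X using that setGs[of X] unfolding Dv_def gv_def by auto
  have dist: "distinct (map snd pre)"
  proof -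
    have vn: "M \<le> fst X \<and> fst X < m" if "X \<in> set Vs" for X using that unfolding Vs_def by auto
    have a1: "X \<notin> set Vs" if "X \<in> set (map snd (dd (M0 qs) qs))" for X
      using n1[OF that] vn[of X] by linarith
    have a2: "X \<notin> set (Gs @ [Dv])" if "X \<in> set (map snd (dd (M0 qs) qs))" for X
      using n1[OF that] GDn[of X] Mm by linarith
    have a3: "X \<notin> set (Gs @ [Dv])" if "X \<in> set Vs" for X
      using vn[OF that] GDn[of X] by linarith
    show ?thesis unfolding msp distinct_append
      using d1 dVs dGD a1 a2 a3 by (simp add: disjoint_iff)
  qed
  define V where "V = snd ` set pre"
  have VV: "snd ` set pre = set (map snd pre)" by simp
  have inVs: "X \<in> V" if "X \<in> set Vs" for X using that unfolding V_def VV msp by auto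
  have inGs: "gv N m i \<in> V" if "i < L" for i using that setGs unfolding V_def VV msp by auto
  have inDv: "Dv \<in> V" unfolding V_def VV msp by auto
  have inq: "X \<in> V" if "X \<in> svs p" for X
  proof -
    have "X \<in> snd ` set qs" using wf_svs[OF wf] that by blast
    then have "X \<in> snd ` set (dd (M0 qs) qs)" by (rule dd_keep)
    then show ?thesis unfolding V_def pre_def by auto
  qed
  have items: "(case it of ITau l \<Rightarrow> wf_lit \<tau> W l | ISO b X xs \<Rightarrow> X \<in> V \<and> length xs = snd X \<and> set xs \<subseteq> W)"
    if i: "i < L" and it: "it \<in> set (chks!i)" for i it
  proof (cases i)
    case 0
    then have "it = ISO True (M,N) [0..<N]" using it unfolding chks_def by simp
    moreover have "(M,N) \<in> set Vs" using setVs Mm by simp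
    ultimately show ?thesis using inVs unfolding W_def by auto
  next
    case (Suc i')
    then have c: "chks ! i \<in> set (snd (tr N M True p))" using i unfolding chks_def L_def by simp
    have w: "case it of ITau l \<Rightarrow> wf_lit \<tau> (set [0..<N+4]) l | ISO b X xs \<Rightarrow> length xs = snd X"
      using tr_wf[OF wf _ c it] N_def by simp
    have sv: "X \<in> V" if "X \<in> isv it" for X
    proof -
      have "X \<in> svs p \<or> inR N M m X" using tr_isv[OF c it that] m_def by blast
      then show ?thesis using inq inVs setVs by blast
    qed
    have iv: "x \<in> W" if "x \<in> ivars it" for x
      using tr_ivars[OF _ c it that] N_def unfolding W_def by fastforce
    show ?thesis
    proof (cases it)
      case (ITau l) then show ?thesis using w unfolding W_def by simp
    next
      case (ISO b X xs) then show ?thesis using w sv iv by auto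
    qed
  qed
  have W4: "x \<in> W" if "x < N + 4" for x using that unfolding W_def by simp
  have lGA: "length (GA N) = snd (gv N m i)" "set (GA N) \<subseteq> W" for i unfolding GA_def gv_def W_def by auto
  have wfc: "wf_clause \<tau> V W c" if c: "c \<in> set (mux N m chks @ dcl Dv # sclauses qs p Dv)" for c
  proof -
    from c consider "c \<in> set (mux N m chks)" | "c = dcl Dv" | "c \<in> set (sclauses qs p Dv)" by auto
    then show ?thesis
    proof cases
      case 1
      then consider "c = top_cl N m" | i it where "i < L" "it \<in> set (chks!i)" "c = item_cl N m i it"
        | i where "i < L" "c = chain_cl N m L i" unfolding mux_mem L_def by blast
      then show ?thesis
      proof cases
        case 1 then show ?thesis using inGs[OF L0] W4 by (simp add: top_cl_def wf_clause_simp)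
      next
        case (2 i it)
        have it: "(case it of ITau l \<Rightarrow> wf_lit \<tau> W l | ISO b X xs \<Rightarrow> X \<in> V \<and> length xs = snd X \<and> set xs \<subseteq> W)"
          using items[OF 2(1,2)] .
        show ?thesis
        proof (cases it)
          case (ITau l) then show ?thesis using 2 it inGs[OF 2(1)] W4 lGA by (simp add: item_cl_def wf_clause_simp)
        next
          case (ISO b X xs) then show ?thesis using 2 it inGs[OF 2(1)] W4 lGA by (simp add: item_cl_def wf_clause_simp)
        qed
      next
        case (3 i) then show ?thesis using inGs W4 lGA by (simp add: chain_cl_def wf_clause_simp)
      qed
    next
      case 2 then show ?thesis using inDv W4 by (simp add: dcl_def wf_clause_simp Dv_def)
    next
      case 3
      then obtain bs where c: "c = scl (rels p) Dv bs" unfolding sclauses_def by auto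
      have "wf_lit \<tau> W (LRel (\<not> bs!j) (rels p ! j) (replicate (snd (rels p ! j)) 0))" if "j < length (rels p)" for j
        using rels_wf[OF wf, of "rels p ! j"] that W4 by auto
      then show ?thesis using inDv by (auto simp: c scl_def wf_clause_simp)
    qed
  qed
  show ?thesis unfolding bd KROM_class_def
    using pcl dist wfc unfolding V_def W_def by blast
qed

lemma last_False:
  assumes "prefix_class b k qs" "(b \<and> even k) \<or> (\<not> b \<and> odd k)"
  shows "last (map fst qs) = False"
proof -
  have ne: "map fst qs \<noteq> []" and h: "hd (map fst qs) = b" and n: "length (remdups_adj (map fst qs)) = k"
    using assms(1) unfolding prefix_class_def nblocks_def by (auto simp: hd_map)
  show ?thesis using last_alt[OF ne] h n assms(2) by auto
qed

lemma main:
  assumes "f \<in> SO_class b k \<tau>" "(b \<and> even k) \<or> (\<not> b \<and> odd k)"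
  shows "\<exists>g\<in>KROM_class b (k + 1) \<tau>. equivalent \<tau> f g"
proof -
  obtain qs p where f: "f = SO qs p" and pc: "prefix_class b k qs" using assms(1) unfolding SO_class_def by auto
  have "last (map fst qs) = False" using last_False[OF pc assms(2)] .
  then show ?thesis using build_class build_equiv assms(1) unfolding f by blast
qed

theorem proposition3p3:
  fixes k :: nat
  assumes "k \<ge> 1"
  shows "(even k \<longrightarrow> class_le (Sigma1 k) (Sigma1_KROM (k + 1)))
       \<and> (odd k \<longrightarrow> class_le (Pi1 k) (Pi1_KROM (k + 1)))"
  unfolding class_le_def Sigma1_def Sigma1_KROM_def Pi1_def Pi1_KROM_def
  using main by blast


end
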